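(* Let $P$ and $Q$ be unital associative algebras over a field $k$ and let $\varphi\colon Q\to P$ be a morphism of unital algebras. Let $Z:=P\oplus Q$ be the mapping cylinder algebra (defined in the context). Let $X$ be a right $P$-module and $Y$ a left $P$-module, regarded as a right, resp. left, $Z$-module via $x\triangleleft(p,q):=x\triangleleft p+x\triangleleft\varphi(q)$ and $(p,q)\triangleright y:=p\triangleright y+\varphi(q)\triangleright y$. Then ${\rm Tor}^Z_n(X,Y)\cong{\rm Tor}^P_n(X,Y)$ for all $n\geq 0$.
   Context: All algebras are unital associative $k$-algebras and tensor products are over $k$. The mapping cylinder algebra of $\varphi\colon Q\to P$ is the vector space $Z=P\oplus Q$ with multiplication $(p,q)\cdot(p',q')=(pp'+p\varphi(q')+\varphi(q)p',\,qq')$ and unit $(0,1)$; $P$ is a two-sided ideal in $Z$. *)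

theory Defs
  imports Complex_Main
begin

definition is_k_algebra :: "('k::field \<Rightarrow> 'a::ring_1 \<Rightarrow> 'a) \<Rightarrow> bool" where
  "is_k_algebra s \<longleftrightarrow> vector_space s \<and>
     (\<forall>c a b. s c (a * b) = s c a * b \<and> s c (a * b) = a * s c b)"

definition is_unital_alg_hom ::
  "('k::field \<Rightarrow> 'q::ring_1 \<Rightarrow> 'q) \<Rightarrow> ('k \<Rightarrow> 'p::ring_1 \<Rightarrow> 'p) \<Rightarrow> ('q \<Rightarrow> 'p) \<Rightarrow> bool" where
  "is_unital_alg_hom sQ sP \<phi> \<longleftrightarrow> \<phi> 1 = 1 \<and>
     (\<forall>a b. \<phi> (a * b) = \<phi> a * \<phi> b) \<and> (\<forall>a b. \<phi> (a + b) = \<phi> a + \<phi> b) \<and>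
     (\<forall>c a. \<phi> (sQ c a) = sP c (\<phi> a))"

text \<open>Right / left modules over the ring P (the k-structure is induced via k -> P).\<close>
definition is_right_module :: "('x::ab_group_add \<Rightarrow> 'p::ring_1 \<Rightarrow> 'x) \<Rightarrow> bool" where
  "is_right_module act \<longleftrightarrow> (\<forall>x. act x 1 = x) \<and> (\<forall>x a b. act x (a * b) = act (act x a) b) \<and>
     (\<forall>x x' a. act (x + x') a = act x a + act x' a) \<and> (\<forall>x a b. act x (a + b) = act x a + act x b)"

definition is_left_module :: "('p::ring_1 \<Rightarrow> 'y::ab_group_add \<Rightarrow> 'y) \<Rightarrow> bool" where
  "is_left_module act \<longleftrightarrow> (\<forall>y. act 1 y = y) \<and> (\<forall>y a b. act (a * b) y = act a (act b y)) \<and>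
     (\<forall>y y' a. act a (y + y') = act a y + act a y') \<and> (\<forall>y a b. act (a + b) y = act a y + act b y)"

definition cyl_add :: "'p::ring_1 \<times> 'q::ring_1 \<Rightarrow> 'p \<times> 'q \<Rightarrow> 'p \<times> 'q" where
  "cyl_add z z' = (fst z + fst z', snd z + snd z')"

definition cyl_mult :: "('q::ring_1 \<Rightarrow> 'p::ring_1) \<Rightarrow> 'p \<times> 'q \<Rightarrow> 'p \<times> 'q \<Rightarrow> 'p \<times> 'q" where
  "cyl_mult \<phi> z z' = (fst z * fst z' + fst z * \<phi> (snd z') + \<phi> (snd z) * fst z', snd z * snd z')"

definition cyl_one :: "'p::ring_1 \<times> 'q::ring_1" where
  "cyl_one = (0, 1)"

definition cyl_scale :: "('k \<Rightarrow> 'p \<Rightarrow> 'p) \<Rightarrow> ('k \<Rightarrow> 'q \<Rightarrow> 'q) \<Rightarrow> 'k \<Rightarrow> 'p \<times> 'q \<Rightarrow> 'p \<times> 'q" where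
  "cyl_scale sP sQ c z = (sP c (fst z), sQ c (snd z))"

definition cyl_ract :: "('q \<Rightarrow> 'p) \<Rightarrow> ('x::ab_group_add \<Rightarrow> 'p \<Rightarrow> 'x) \<Rightarrow> 'x \<Rightarrow> 'p \<times> 'q \<Rightarrow> 'x" where
  "cyl_ract \<phi> act x z = act x (fst z) + act x (\<phi> (snd z))"

definition cyl_lact :: "('q \<Rightarrow> 'p) \<Rightarrow> ('p \<Rightarrow> 'y::ab_group_add \<Rightarrow> 'y) \<Rightarrow> 'p \<times> 'q \<Rightarrow> 'y \<Rightarrow> 'y" where
  "cyl_lact \<phi> act z y = act (fst z) y + act (\<phi> (snd z)) y"

text \<open>Chains of degree n: finitely supported k-valued functions on tuples (x, [a1..an], y),
 i.e. the free k-vector space on X x A^n x Y; the tensor product over k is its quotient by the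
 span of the multilinearity relations.\<close>

definition kdelta :: "'b \<Rightarrow> 'b \<Rightarrow> 'k::zero_neq_one" where
  "kdelta b = (\<lambda>g. if g = b then 1 else 0)"

inductive_set kspan :: "('b \<Rightarrow> 'k::field) set \<Rightarrow> ('b \<Rightarrow> 'k) set" for S where
  zero: "(\<lambda>_. 0) \<in> kspan S"
| step: "s \<in> S \<Longrightarrow> t \<in> kspan S \<Longrightarrow> (\<lambda>g. c * s g + t g) \<in> kspan S"

definition bar_chains :: "nat \<Rightarrow> ('x \<times> 'a list \<times> 'y \<Rightarrow> 'k::zero) set" where
  "bar_chains n = {f. finite {g. f g \<noteq> 0} \<and> (\<forall>x as y. f (x, as, y) \<noteq> 0 \<longrightarrow> length as = n)}"

definition bar_rel_gens ::
  "('a \<Rightarrow> 'a \<Rightarrow> 'a) \<Rightarrow> ('k::field \<Rightarrow> 'a \<Rightarrow> 'a) \<Rightarrow> 'a \<Rightarrow> ('x::ab_group_add \<Rightarrow> 'a \<Rightarrow> 'x)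
    \<Rightarrow> ('a \<Rightarrow> 'y::ab_group_add \<Rightarrow> 'y) \<Rightarrow> nat \<Rightarrow> ('x \<times> 'a list \<times> 'y \<Rightarrow> 'k) set" where
  "bar_rel_gens addA sA oneA actX actY n =
     {\<lambda>g. kdelta (x + x', as, y) g - kdelta (x, as, y) g - kdelta (x', as, y) g
        | x x' as y. length as = n}
   \<union> {\<lambda>g. kdelta (actX x (sA c oneA), as, y) g - c * kdelta (x, as, y) g
        | x c as y. length as = n}
   \<union> {\<lambda>g. kdelta (x, as[i := addA a a'], y) g - kdelta (x, as[i := a], y) g
              - kdelta (x, as[i := a'], y) g
        | x as y i a a'. length as = n \<and> i < n}
   \<union> {\<lambda>g. kdelta (x, as[i := sA c a], y) g - c * kdelta (x, as[i := a], y) g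
        | x as y i a c. length as = n \<and> i < n}
   \<union> {\<lambda>g. kdelta (x, as, y + y') g - kdelta (x, as, y) g - kdelta (x, as, y') g
        | x as y y'. length as = n}
   \<union> {\<lambda>g. kdelta (x, as, actY (sA c oneA) y) g - c * kdelta (x, as, y) g
        | x c as y. length as = n}"

definition bar_d_basis ::
  "('a \<Rightarrow> 'a \<Rightarrow> 'a) \<Rightarrow> ('x \<Rightarrow> 'a \<Rightarrow> 'x) \<Rightarrow> ('a \<Rightarrow> 'y \<Rightarrow> 'y)
    \<Rightarrow> 'x \<times> 'a list \<times> 'y \<Rightarrow> 'x \<times> 'a list \<times> 'y \<Rightarrow> 'k::field" where
  "bar_d_basis multA actX actY t = (case t of (x, as, y) \<Rightarrow>
     if as = [] then (\<lambda>_. 0) else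
     (\<lambda>g. kdelta (actX x (hd as), tl as, y) g
        + (\<Sum>i < length as - 1. (-1) ^ (i + 1) *
             kdelta (x, take i as @ [multA (as ! i) (as ! (i + 1))] @ drop (i + 2) as, y) g)
        + (-1) ^ length as * kdelta (x, butlast as, actY (last as) y) g))"

definition lin_ext :: "('b \<Rightarrow> 'c \<Rightarrow> 'k::comm_ring_1) \<Rightarrow> ('b \<Rightarrow> 'k) \<Rightarrow> 'c \<Rightarrow> 'k" where
  "lin_ext T f = (\<lambda>c. \<Sum>b \<in> {b. f b \<noteq> 0}. f b * T b c)"

definition bar_cycles ::
  "('a \<Rightarrow> 'a \<Rightarrow> 'a) \<Rightarrow> ('a \<Rightarrow> 'a \<Rightarrow> 'a) \<Rightarrow> ('k::field \<Rightarrow> 'a \<Rightarrow> 'a) \<Rightarrow> 'a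
    \<Rightarrow> ('x::ab_group_add \<Rightarrow> 'a \<Rightarrow> 'x) \<Rightarrow> ('a \<Rightarrow> 'y::ab_group_add \<Rightarrow> 'y) \<Rightarrow> nat
    \<Rightarrow> ('x \<times> 'a list \<times> 'y \<Rightarrow> 'k) set" where
  "bar_cycles addA multA sA oneA actX actY n =
     {f \<in> bar_chains n. (case n of 0 \<Rightarrow> True
        | Suc m \<Rightarrow> lin_ext (bar_d_basis multA actX actY) f \<in> kspan (bar_rel_gens addA sA oneA actX actY m))}"

definition bar_boundaries ::
  "('a \<Rightarrow> 'a \<Rightarrow> 'a) \<Rightarrow> ('a \<Rightarrow> 'a \<Rightarrow> 'a) \<Rightarrow> ('k::field \<Rightarrow> 'a \<Rightarrow> 'a) \<Rightarrow> 'a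
    \<Rightarrow> ('x::ab_group_add \<Rightarrow> 'a \<Rightarrow> 'x) \<Rightarrow> ('a \<Rightarrow> 'y::ab_group_add \<Rightarrow> 'y) \<Rightarrow> nat
    \<Rightarrow> ('x \<times> 'a list \<times> 'y \<Rightarrow> 'k) set" where
  "bar_boundaries addA multA sA oneA actX actY n =
     {\<lambda>g. lin_ext (bar_d_basis multA actX actY) h g + r g
        | h r. h \<in> bar_chains (Suc n) \<and> r \<in> kspan (bar_rel_gens addA sA oneA actX actY n)}"

text \<open>k-linear isomorphism between quotient spaces Z1/B1 and Z2/B2 (given by a k-linear map
 Z1 -> Z2 respecting the subspaces and inducing a bijection of the quotients).\<close>
definition quot_iso ::
  "('b \<Rightarrow> 'k::field) set \<Rightarrow> ('b \<Rightarrow> 'k) set \<Rightarrow> ('c \<Rightarrow> 'k) set \<Rightarrow> ('c \<Rightarrow> 'k) set \<Rightarrow> bool" where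
  "quot_iso Z1 B1 Z2 B2 \<longleftrightarrow> (\<exists>h.
     (\<forall>u\<in>Z1. \<forall>v\<in>Z1. h (\<lambda>g. u g + v g) = (\<lambda>g'. h u g' + h v g')) \<and>
     (\<forall>c. \<forall>u\<in>Z1. h (\<lambda>g. c * u g) = (\<lambda>g'. c * h u g')) \<and>
     h ` Z1 \<subseteq> Z2 \<and> h ` B1 \<subseteq> B2 \<and>
     (\<forall>z\<in>Z2. \<exists>w\<in>Z1. (\<lambda>g. z g - h w g) \<in> B2) \<and>
     (\<forall>w\<in>Z1. h w \<in> B2 \<longrightarrow> w \<in> B1))"

definition Tor_iso ::
  "('a \<Rightarrow> 'a \<Rightarrow> 'a) \<Rightarrow> ('a \<Rightarrow> 'a \<Rightarrow> 'a) \<Rightarrow> ('k::field \<Rightarrow> 'a \<Rightarrow> 'a) \<Rightarrow> 'a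
    \<Rightarrow> ('x::ab_group_add \<Rightarrow> 'a \<Rightarrow> 'x) \<Rightarrow> ('a \<Rightarrow> 'y::ab_group_add \<Rightarrow> 'y)
    \<Rightarrow> ('b \<Rightarrow> 'b \<Rightarrow> 'b) \<Rightarrow> ('b \<Rightarrow> 'b \<Rightarrow> 'b) \<Rightarrow> ('k \<Rightarrow> 'b \<Rightarrow> 'b) \<Rightarrow> 'b
    \<Rightarrow> ('x \<Rightarrow> 'b \<Rightarrow> 'x) \<Rightarrow> ('b \<Rightarrow> 'y \<Rightarrow> 'y) \<Rightarrow> nat \<Rightarrow> bool" where
  "Tor_iso addA multA sA oneA actXA actYA addB multB sB oneB actXB actYB n \<longleftrightarrow>
     quot_iso (bar_cycles addA multA sA oneA actXA actYA n :: ('x \<times> 'a list \<times> 'y \<Rightarrow> 'k) set)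
              (bar_boundaries addA multA sA oneA actXA actYA n)
              (bar_cycles addB multB sB oneB actXB actYB n :: ('x \<times> 'b list \<times> 'y \<Rightarrow> 'k) set)
              (bar_boundaries addB multB sB oneB actXB actYB n)"

end

theory Submission
  imports Defs
begin

definition fsp :: "('b \<Rightarrow> 'k::zero) \<Rightarrow> 'b set" where
  "fsp f = {g. f g \<noteq> 0}"

abbreviation fin :: "('b \<Rightarrow> 'k::zero) \<Rightarrow> bool" where
  "fin f \<equiv> finite (fsp f)"

lemma lin_ext_superset:
  "finite S \<Longrightarrow> fsp f \<subseteq> S \<Longrightarrow> lin_ext T f c = (\<Sum>b\<in>S. f b * T b c)"
  unfolding lin_ext_def fsp_def by (rule sum.mono_neutral_left) auto

lemma fin_add: "fin f \<Longrightarrow> fin g \<Longrightarrow> fin (\<lambda>b. f b + (g b :: 'k::monoid_add))"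
  by (rule finite_subset[of _ "fsp f \<union> fsp g"]) (auto simp: fsp_def)

lemma fin_diff: "fin f \<Longrightarrow> fin g \<Longrightarrow> fin (\<lambda>b. f b - (g b :: 'k::ab_group_add))"
  by (rule finite_subset[of _ "fsp f \<union> fsp g"]) (auto simp: fsp_def)

lemma fin_scale: "fin f \<Longrightarrow> fin (\<lambda>b. a * (f b :: 'k::field))"
  by (rule finite_subset[of _ "fsp f"]) (auto simp: fsp_def)

lemma fin_zero: "fin (\<lambda>_. 0)"
  by (simp add: fsp_def)

lemma fin_kdelta: "fin (kdelta b)"
  by (rule finite_subset[of _ "{b}"]) (auto simp: fsp_def kdelta_def)

lemma fin_sum: "finite I \<Longrightarrow> (\<And>i. i \<in> I \<Longrightarrow> fin (f i)) \<Longrightarrow> fin (\<lambda>b. \<Sum>i\<in>I. (f i b :: 'k::comm_monoid_add))"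
proof (induction I rule: finite_induct)
  case empty then show ?case by (simp add: fsp_def)
next
  case (insert x F)
  have "fin (\<lambda>b. f x b + (\<Sum>i\<in>F. f i b))"
    by (rule finite_subset[of _ "fsp (f x) \<union> fsp (\<lambda>b. \<Sum>i\<in>F. f i b)"])
       (use insert in \<open>auto simp: fsp_def\<close>)
  then show ?case using insert by simp
qed

lemma lin_ext_add:
  fixes f g :: "'b \<Rightarrow> 'k::comm_ring_1"
  assumes "fin f" "fin g"
  shows "lin_ext T (\<lambda>b. f b + g b) = (\<lambda>c. lin_ext T f c + lin_ext T g c)"
proof
  fix c
  let ?S = "fsp f \<union> fsp g"
  have fS: "finite ?S" using assms by auto
  have "lin_ext T (\<lambda>b. f b + g b) c = (\<Sum>b\<in>?S. (f b + g b) * T b c)"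
    by (rule lin_ext_superset[OF fS]) (auto simp: fsp_def)
  also have "\<dots> = (\<Sum>b\<in>?S. f b * T b c) + (\<Sum>b\<in>?S. g b * T b c)"
    by (simp add: distrib_right sum.distrib)
  also have "\<dots> = lin_ext T f c + lin_ext T g c"
  proof -
    have "lin_ext T f c = (\<Sum>b\<in>?S. f b * T b c)" by (rule lin_ext_superset[OF fS]) auto
    moreover have "lin_ext T g c = (\<Sum>b\<in>?S. g b * T b c)" by (rule lin_ext_superset[OF fS]) auto
    ultimately show ?thesis by simp
  qed
  finally show "lin_ext T (\<lambda>b. f b + g b) c = lin_ext T f c + lin_ext T g c" .
qed

lemma lin_ext_scale:
  fixes f :: "'b \<Rightarrow> 'k::comm_ring_1"
  assumes "fin f"
  shows "lin_ext T (\<lambda>b. a * f b) = (\<lambda>c. a * lin_ext T f c)"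
proof
  fix c
  have "lin_ext T (\<lambda>b. a * f b) c = (\<Sum>b\<in>fsp f. (a * f b) * T b c)"
    by (rule lin_ext_superset[OF assms]) (auto simp: fsp_def)
  also have "\<dots> = a * (\<Sum>b\<in>fsp f. f b * T b c)"
    by (simp add: sum_distrib_left mult.assoc)
  also have "\<dots> = a * lin_ext T f c"
    using lin_ext_superset[OF assms, of f T c] by auto
  finally show "lin_ext T (\<lambda>b. a * f b) c = a * lin_ext T f c" .
qed

lemma lin_ext_zero: "lin_ext T (\<lambda>_. 0) = (\<lambda>_. 0)"
  by (simp add: lin_ext_def)

lemma lin_ext_kdelta: "lin_ext T (kdelta b) = (T b :: _ \<Rightarrow> 'k::comm_ring_1)"
proof
  fix c
  have "lin_ext T (kdelta b) c = (\<Sum>b'\<in>{b}. kdelta b b' * T b' c)"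
    by (rule lin_ext_superset) (auto simp: fsp_def kdelta_def)
  then show "lin_ext T (kdelta b) c = T b c" by (simp add: kdelta_def)
qed

lemma lin_ext_diff:
  fixes f g :: "'b \<Rightarrow> 'k::comm_ring_1"
  assumes "fin f" "fin g"
  shows "lin_ext T (\<lambda>b. f b - g b) = (\<lambda>c. lin_ext T f c - lin_ext T g c)"
proof -
  have "fin (\<lambda>b. (-1) * g b)"
    by (rule finite_subset[of _ "fsp g"]) (use assms in \<open>auto simp: fsp_def\<close>)
  then have "lin_ext T (\<lambda>b. f b + (-1) * g b) = (\<lambda>c. lin_ext T f c + lin_ext T (\<lambda>b. (-1) * g b) c)"
    using lin_ext_add[OF assms(1)] by blast
  moreover have "lin_ext T (\<lambda>b. (-1) * g b) = (\<lambda>c. (-1) * lin_ext T g c)"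
    by (rule lin_ext_scale[OF assms(2)])
  ultimately show ?thesis by simp
qed

lemma lin_ext_sum:
  fixes f :: "'i \<Rightarrow> 'b \<Rightarrow> 'k::comm_ring_1"
  assumes "finite I" "\<And>i. i \<in> I \<Longrightarrow> fin (f i)"
  shows "lin_ext T (\<lambda>b. \<Sum>i\<in>I. f i b) = (\<lambda>c. \<Sum>i\<in>I. lin_ext T (f i) c)"
  using assms
proof (induction I rule: finite_induct)
  case empty then show ?case by (simp add: lin_ext_zero)
next
  case (insert x F)
  have "fin (\<lambda>b. \<Sum>i\<in>F. f i b)" by (rule fin_sum) (use insert in auto)
  then have "lin_ext T (\<lambda>b. f x b + (\<Sum>i\<in>F. f i b)) = (\<lambda>c. lin_ext T (f x) c + lin_ext T (\<lambda>b. \<Sum>i\<in>F. f i b) c)"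
    using lin_ext_add[of "f x" "\<lambda>b. \<Sum>i\<in>F. f i b" T] insert by auto
  then show ?case using insert by simp
qed

lemma lin_ext_cong: "(\<And>b. f b \<noteq> 0 \<Longrightarrow> T b = T' b) \<Longrightarrow> lin_ext T f = lin_ext T' f"
  unfolding lin_ext_def by (intro ext sum.cong) auto

lemma fin_lin_ext:
  fixes f :: "'b \<Rightarrow> 'k::comm_ring_1"
  assumes "fin f" "\<And>b. f b \<noteq> 0 \<Longrightarrow> fin (T b)"
  shows "fin (lin_ext T f)"
proof -
  have "lin_ext T f = (\<lambda>c. \<Sum>b\<in>fsp f. f b * T b c)"
    unfolding lin_ext_def fsp_def by simp
  moreover have "fin (\<lambda>c. \<Sum>b\<in>fsp f. f b * T b c)"
  proof (rule fin_sum[OF assms(1)])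
    fix b assume "b \<in> fsp f"
    then have "fin (T b)" using assms(2) by (auto simp: fsp_def)
    then show "fin (\<lambda>c. f b * T b c)" by (rule finite_subset[rotated]) (auto simp: fsp_def)
  qed
  ultimately show ?thesis by simp
qed

lemma lin_ext_comp:
  fixes f :: "'b \<Rightarrow> 'k::comm_ring_1"
  assumes "fin f" "\<And>b. f b \<noteq> 0 \<Longrightarrow> fin (S b)"
  shows "lin_ext T (lin_ext S f) = lin_ext (\<lambda>b. lin_ext T (S b)) f"
proof -
  have e: "lin_ext S f = (\<lambda>c. \<Sum>b\<in>fsp f. f b * S b c)"
    unfolding lin_ext_def fsp_def by simp
  have fi: "fin (\<lambda>c. f b * S b c)" if "b \<in> fsp f" for b
  proof -
    have "fin (S b)" using assms(2) that by (auto simp: fsp_def)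
    then show ?thesis by (rule finite_subset[rotated]) (auto simp: fsp_def)
  qed
  have "lin_ext T (lin_ext S f) = (\<lambda>c. \<Sum>b\<in>fsp f. lin_ext T (\<lambda>c. f b * S b c) c)"
    unfolding e by (rule lin_ext_sum[OF assms(1) fi])
  also have "\<dots> = (\<lambda>c. \<Sum>b\<in>fsp f. f b * lin_ext T (S b) c)"
  proof (intro ext sum.cong refl)
    fix c b assume "b \<in> fsp f"
    then have "fin (S b)" using assms(2) by (auto simp: fsp_def)
    then show "lin_ext T (\<lambda>c. f b * S b c) c = f b * lin_ext T (S b) c"
      by (simp add: lin_ext_scale)
  qed
  also have "\<dots> = lin_ext (\<lambda>b. lin_ext T (S b)) f"
    unfolding lin_ext_def fsp_def by simp
  finally show ?thesis .
qed

lemma lin_ext_id: "fin f \<Longrightarrow> lin_ext kdelta f = (f :: _ \<Rightarrow> 'k::comm_ring_1)"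
proof
  fix c assume a: "fin f"
  show "lin_ext kdelta f c = f c"
  proof (cases "f c = 0")
    case True
    then show ?thesis unfolding lin_ext_def kdelta_def by (auto intro: sum.neutral)
  next
    case False
    have "lin_ext kdelta f c = (\<Sum>b\<in>insert c (fsp f). f b * kdelta b c)"
      by (rule lin_ext_superset) (use a in auto)
    also have "\<dots> = f c" 
      by (subst sum.remove[of _ c]) (use a False in \<open>auto simp: kdelta_def fsp_def intro!: sum.neutral split: if_splits\<close>)
    finally show ?thesis .
  qed
qed

definition face :: "('a\<Rightarrow>'a\<Rightarrow>'a) \<Rightarrow> ('x\<Rightarrow>'a\<Rightarrow>'x) \<Rightarrow> ('a\<Rightarrow>'y\<Rightarrow>'y) \<Rightarrow> nat \<Rightarrow> 'x\<times>'a list\<times>'y \<Rightarrow> 'x\<times>'a list\<times>'y" where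
 "face m r l j t = (case t of (x,as,y) \<Rightarrow> if j = 0 then (r x (hd as), tl as, y)
    else if j < length as then (x, take (j-1) as @ [m (as!(j-1)) (as!j)] @ drop (j+1) as, y)
    else (x, butlast as, l (last as) y))"

definition hL :: "('a \<Rightarrow> 'a) \<Rightarrow> 'a \<Rightarrow> nat \<Rightarrow> 'a list \<Rightarrow> 'a list" where
  "hL c u i as = map c (take i as) @ u # drop i as"

lemma face0: "face m r l 0 (x,as,y) = (r x (hd as), tl as, y)"
  by (simp add: face_def)
lemma face_mid: "0 < j \<Longrightarrow> j < length as \<Longrightarrow>
  face m r l j (x,as,y) = (x, take (j-1) as @ [m (as!(j-1)) (as!j)] @ drop (j+1) as, y)"
  by (simp add: face_def)
lemma face_last: "0 < j \<Longrightarrow> length as \<le> j \<Longrightarrow> face m r l j (x,as,y) = (x, butlast as, l (last as) y)"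
  by (simp add: face_def)
lemma len_hL[simp]: "length (hL c u i as) = Suc (length as)"
  by (simp add: hL_def)

lemma S2:
  assumes H2: "\<And>a. m (c a) u = c a" and H4: "\<And>x. r x u = x" and "i \<le> length as"
  shows "face m r l i (x, hL c u i as, y) = (x, map c (take i as) @ drop i as, y)"
proof (cases "i = 0")
  case True then show ?thesis by (simp add: face_def hL_def H4)
next
  case False
  then obtain k where i: "i = Suc k" by (cases i) auto
  then have k: "k < length as" using assms by simp
  have "take k (map c (take i as) @ u # drop i as) = map c (take k as)" using i k by (simp add: take_map min_def) 
  moreover have "(map c (take i as) @ u # drop i as) ! k = c (as ! k)" using i k by (simp add: nth_append)
  moreover have "(map c (take i as) @ u # drop i as) ! i = u" using i k by (simp add: nth_append)
  moreover have "drop (i+1) (map c (take i as) @ u # drop i as) = drop i as" using i k by simp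
  moreover have "map c (take i as) = map c (take k as) @ [c (as ! k)]" using i k by (simp add: take_Suc_conv_app_nth)
  moreover have "face m r l i (x, hL c u i as, y) = (x, take k (hL c u i as) @ [m (hL c u i as!k) (hL c u i as!i)] @ drop (i+1) (hL c u i as), y)"
    using i k by (subst face_mid) auto
  ultimately show ?thesis unfolding hL_def using i k by (simp add: H2)
qed

lemma S3:
  assumes H3: "\<And>a. m u a = c a" and H6: "\<And>y. l u y = y" and "i \<le> length as"
  shows "face m r l (Suc i) (x, hL c u i as, y) = (x, map c (take (Suc i) as) @ drop (Suc i) as, y)"
proof (cases "i = length as")
  case True then show ?thesis by (subst face_last) (auto simp: hL_def H6)
next
  case False
  then have k: "i < length as" using assms by simp
  have "take i (map c (take i as) @ u # drop i as) = map c (take i as)" using k by (simp)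
  moreover have "(map c (take i as) @ u # drop i as) ! i = u" using k by (simp add: nth_append)
  moreover have "(map c (take i as) @ u # drop i as) ! Suc i = as ! i" using k by (simp add: nth_append)
  moreover have "drop (Suc i+1) (map c (take i as) @ u # drop i as) = drop (Suc i) as" using k by simp
  moreover have "map c (take (Suc i) as) = map c (take i as) @ [c (as ! i)]" using k by (simp add: take_Suc_conv_app_nth)
  moreover have "drop i as = as ! i # drop (Suc i) as" using k by (simp add: Cons_nth_drop_Suc)
  moreover have "face m r l (Suc i) (x, hL c u i as, y) = (x, take i (hL c u i as) @ [m (hL c u i as!i) (hL c u i as!Suc i)] @ drop (Suc i+1) (hL c u i as), y)"
    using k by (subst face_mid) auto
  ultimately show ?thesis unfolding hL_def using k by (simp add: H3)
qed

lemma S1_mid_aux: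
  assumes H1: "\<And>a b. m (c a) (c b) = c (m a b)"
  shows "face m r l (Suc (length A)) (x, hL c u (Suc (Suc (length A) + k)) (A@a1#a2#B), y)
     = (x, hL c u (Suc (length A) + k) (A @ [m a1 a2] @ B), y)"
  apply (subst face_mid)
    apply simp
   apply (simp add: hL_def)
  apply (simp add: hL_def nth_append H1)
  done

lemma S4_mid_aux0:
  "face m r l (Suc (Suc (length A1 + length A2))) (x, hL c u (length A1) (A1@A2@a1#a2#B), y)
     = (x, hL c u (length A1) (A1 @ A2 @ [m a1 a2] @ B), y)"
  apply (subst face_mid)
    apply simp
   apply (simp add: hL_def)
  apply (simp add: hL_def nth_append eval_nat_numeral)
  done

lemma S4_mid_aux:
  assumes "i \<le> length A"
  shows "face m r l (Suc (Suc (length A))) (x, hL c u i (A@a1#a2#B), y)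
     = (x, hL c u i (A @ [m a1 a2] @ B), y)"
proof -
  have "A = take i A @ drop i A" by simp
  then show ?thesis using S4_mid_aux0[of m r l "take i A" "drop i A" x c u a1 a2 B y] assms
    by (metis append_assoc length_append length_take min_absorb2)
qed

definition ht :: "('a \<Rightarrow> 'a) \<Rightarrow> 'a \<Rightarrow> nat \<Rightarrow> 'x\<times>'a list\<times>'y \<Rightarrow> 'x\<times>'a list\<times>'y" where
  "ht c u i t = (case t of (x,as,y) \<Rightarrow> (x, hL c u i as, y))"

lemma decomp3: "0 < j \<Longrightarrow> j < length as \<Longrightarrow> as = take (j-1) as @ as!(j-1) # as!j # drop (j+1) as"
proof -
  assume a: "0 < j" "j < length as"
  have "as = take (j-1) as @ drop (j-1) as" by simp
  also have "drop (j-1) as = as!(j-1) # drop j as" using a Cons_nth_drop_Suc[of "j-1" as] by simp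
  also have "drop j as = as!j # drop (j+1) as" using a by (simp add: Cons_nth_drop_Suc)
  finally show ?thesis .
qed

lemma S1:
  assumes H1: "\<And>a b. m (c a) (c b) = c (m a b)" and H5: "\<And>x a. r x (c a) = r x a"
    and ji: "j < i" and il: "i \<le> length as"
  shows "face m r l j (ht c u i (x,as,y)) = ht c u (i-1) (face m r l j (x,as,y))"
proof (cases "j = 0")
  case True
  obtain a A where as: "as = a # A" using ji il by (cases as) auto
  obtain i' where i: "i = Suc i'" using ji by (cases i) auto
  show ?thesis using True unfolding as i by (simp add: ht_def face0 hL_def H5)
next
  case False
  then have j0: "0 < j" by simp
  have jl: "j < length as" using ji il by simp
  define A where "A = take (j-1) as"
  define a1 where "a1 = as!(j-1)"
  define a2 where "a2 = as!j"
  define B where "B = drop (j+1) as"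
  have as: "as = A @ a1 # a2 # B" unfolding A_def a1_def a2_def B_def by (rule decomp3[OF j0 jl])
  have lA: "length A = j - 1" unfolding A_def using jl by simp
  define k where "k = i - j - 1"
  have i: "i = Suc (Suc (length A) + k)" using lA ji j0 unfolding k_def by simp
  have j: "j = Suc (length A)" using lA j0 by simp
  have "face m r l j (x,as,y) = (x, A @ [m a1 a2] @ B, y)"
    using j0 jl by (simp add: face_mid A_def a1_def a2_def B_def)
  moreover have "face m r l j (ht c u i (x,as,y)) = (x, hL c u (Suc (length A) + k) (A @ [m a1 a2] @ B), y)"
    unfolding ht_def by (simp only: prod.case as i j S1_mid_aux[where m=m and c=c, OF H1])
  ultimately show ?thesis using i by (simp add: ht_def)
qed

lemma hL_snoc: "i \<le> length A \<Longrightarrow> hL c u i (A @ [z]) = hL c u i A @ [z]"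
  by (simp add: hL_def)

lemma S4:
  assumes ij: "Suc i < j" and jl: "j \<le> Suc (length as)"
  shows "face m r l j (ht c u i (x,as,y)) = ht c u i (face m r l (j-1) (x,as,y))"
proof (cases "j = Suc (length as)")
  case True
  have il: "i < length as" using ij True by simp
  then have ne: "as \<noteq> []" by auto
  have as: "as = butlast as @ [last as]" using ne by simp
  have il': "i \<le> length (butlast as)" using il by simp
  have hl: "hL c u i as = hL c u i (butlast as) @ [last as]"
    by (subst as) (rule hL_snoc[OF il'])
  have "face m r l j (ht c u i (x,as,y)) = (x, butlast (hL c u i as), l (last (hL c u i as)) y)"
    unfolding ht_def using True by (simp add: face_last)
  also have "\<dots> = (x, hL c u i (butlast as), l (last as) y)" by (simp only: hl) simp
  also have "face m r l (j-1) (x,as,y) = (x, butlast as, l (last as) y)"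
    using True il by (subst face_last) auto
  ultimately show ?thesis by (simp add: ht_def)
next
  case False
  define j' where "j' = j - 1"
  have j0: "0 < j'" and jl': "j' < length as" using ij jl False unfolding j'_def by auto
  define A where "A = take (j'-1) as"
  define a1 where "a1 = as!(j'-1)"
  define a2 where "a2 = as!j'"
  define B where "B = drop (j'+1) as"
  have as: "as = A @ a1 # a2 # B" unfolding A_def a1_def a2_def B_def by (rule decomp3[OF j0 jl'])
  have lA: "length A = j' - 1" unfolding A_def using jl' by simp
  have j: "j = Suc (Suc (length A))" using lA j0 unfolding j'_def using ij by simp
  have iA: "i \<le> length A" using ij lA j0 unfolding j'_def by simp
  have "face m r l j' (x,as,y) = (x, A @ [m a1 a2] @ B, y)"
    using j0 jl' by (simp add: face_mid A_def a1_def a2_def B_def)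
  moreover have "face m r l j (ht c u i (x,as,y)) = (x, hL c u i (A @ [m a1 a2] @ B), y)"
    unfolding ht_def by (simp only: prod.case as j S4_mid_aux[OF iA])
  ultimately show ?thesis unfolding j'_def by (simp add: ht_def)
qed

lemma comb:
  fixes F G :: "nat \<Rightarrow> nat \<Rightarrow> 'k::comm_ring_1" and A :: "nat \<Rightarrow> 'k"
  assumes "\<forall>i\<le>n. \<forall>j<i. F i j = G (i-1) j"
    "\<forall>i\<le>n. F i i = A i" "\<forall>i\<le>n. F i (Suc i) = A (Suc i)"
    "\<forall>i\<le>n. \<forall>j. Suc i < j \<and> j \<le> Suc n \<longrightarrow> F i j = G i (j-1)"
  shows "(\<Sum>i\<le>n. (-1)^i * (\<Sum>j\<le>Suc n. (-1)^j * F i j)) + (\<Sum>j\<le>n. (-1)^j * (\<Sum>i<n. (-1)^i * G i j)) = A 0 - A (Suc n)"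
  using assms
proof (induction n)
  case 0
  then show ?case by simp
next
  case (Suc n)
  have IH: "(\<Sum>i\<le>n. (-1)^i * (\<Sum>j\<le>Suc n. (-1)^j * F i j)) + (\<Sum>j\<le>n. (-1)^j * (\<Sum>i<n. (-1)^i * G i j)) = A 0 - A (Suc n)"
    using Suc.prems by (intro Suc.IH) auto
  have f1: "\<And>i. i \<le> n \<Longrightarrow> F i (Suc (Suc n)) = G i (Suc n)" using Suc.prems(4) by auto
  have f2: "\<And>j. j \<le> n \<Longrightarrow> F (Suc n) j = G n j" using Suc.prems(1) by auto
  have f3: "F (Suc n) (Suc n) = A (Suc n)" "F (Suc n) (Suc (Suc n)) = A (Suc (Suc n))" using Suc.prems(2,3) by auto
  have L1: "(\<Sum>i\<le>Suc n. (-1)^i * (\<Sum>j\<le>Suc (Suc n). (-1)^j * F i j))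
     = (\<Sum>i\<le>n. (-1)^i * (\<Sum>j\<le>Suc n. (-1)^j * F i j)) + (\<Sum>i\<le>n. (-1)^i * (-1)^n * G i (Suc n))
       + (-1)^(Suc n) * (\<Sum>j\<le>n. (-1)^j * G n j) + A (Suc n) - A (Suc (Suc n))"
  proof -
    have a: "(\<Sum>i\<le>n. (-1)^i * (\<Sum>j\<le>Suc (Suc n). (-1)^j * F i j)) = 
       (\<Sum>i\<le>n. (-1)^i * (\<Sum>j\<le>Suc n. (-1)^j * F i j)) + (\<Sum>i\<le>n. (-1)^i * (-1)^n * G i (Suc n))"
      by (simp add: sum.distrib ring_distribs f1 power_Suc mult.assoc)
    have b: "(\<Sum>j\<le>Suc (Suc n). (-1)^j * F (Suc n) j) = (\<Sum>j\<le>n. (-1)^j * G n j) + (-1)^(Suc n) * A (Suc n) + (-1)^(Suc (Suc n)) * A (Suc (Suc n))"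
      by (simp add: f2 f3)
    have c: "(\<Sum>i\<le>Suc n. (-1)^i * (\<Sum>j\<le>Suc (Suc n). (-1)^j * F i j)) = 
      (\<Sum>i\<le>n. (-1)^i * (\<Sum>j\<le>Suc (Suc n). (-1)^j * F i j)) + (-1)^(Suc n) * (\<Sum>j\<le>Suc (Suc n). (-1)^j * F (Suc n) j)"
      by (rule sum.atMost_Suc)
    show ?thesis
      unfolding c a b
      by (simp add: ring_distribs power_Suc del: sum.atMost_Suc)
  qed
  have L2: "(\<Sum>j\<le>Suc n. (-1)^j * (\<Sum>i<Suc n. (-1)^i * G i j))
     = (\<Sum>j\<le>n. (-1)^j * (\<Sum>i<n. (-1)^i * G i j)) + (\<Sum>j\<le>n. (-1)^j * (-1)^n * G n j)
       + (-1)^(Suc n) * (\<Sum>i\<le>n. (-1)^i * G i (Suc n))"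
    by (simp add: sum.distrib ring_distribs lessThan_Suc_atMost[symmetric] sum_distrib_left mult.assoc mult.left_commute)
  have e1: "(\<Sum>j\<le>n. (-1)^j * (-1)^n * G n j) = (-1)^n * (\<Sum>j\<le>n. (-1)^j * G n j)"
    by (simp add: sum_distrib_left mult.assoc mult.left_commute)
  have e2: "(-1)^(Suc n) * (\<Sum>i\<le>n. (-1)^i * G i (Suc n)) = - (\<Sum>i\<le>n. (-1)^i * (-1)^n * G i (Suc n))"
    by (simp add: sum_distrib_left mult.assoc mult.left_commute sum_negf[symmetric])
  have e3: "(-1)^(Suc n) * (\<Sum>j\<le>n. (-1)^j * G n j) = - ((-1)^n * (\<Sum>j\<le>n. (-1)^j * G n j) :: 'k)"
    by simp
  show ?case
    unfolding L1 L2 e1 e2 e3 using IH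
    by (simp add: algebra_simps del: sum.atMost_Suc)
qed

lemma d_face:
  assumes "as \<noteq> []"
  shows "bar_d_basis m r l (x,as,y) = (\<lambda>g. \<Sum>j\<le>length as. (-1)^j * kdelta (face m r l j (x,as,y)) g :: 'k::field)"
proof
  fix g
  obtain n where n: "length as = Suc n" using assms by (cases as) auto
  let ?K = "\<lambda>j. (-1)^j * kdelta (face m r l j (x,as,y)) g :: 'k"
  have "(\<Sum>j\<le>length as. ?K j) = ?K 0 + (\<Sum>i<n. ?K (Suc i)) + ?K (Suc n)"
  proof -
    have "(\<Sum>j\<le>Suc n. ?K j) = (\<Sum>j\<le>n. ?K j) + ?K (Suc n)" by (rule sum.atMost_Suc)
    moreover have "(\<Sum>j\<le>n. ?K j) = ?K 0 + (\<Sum>i<n. ?K (Suc i))" by (rule sum.atMost_shift)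
    ultimately show ?thesis unfolding n by simp
  qed
  also have "(\<Sum>i<n. ?K (Suc i)) = (\<Sum>i<n. (-1) ^ (i + 1) *
             kdelta (x, take i as @ [m (as ! i) (as ! (i + 1))] @ drop (i + 2) as, y) g)"
    by (intro sum.cong refl) (simp add: face_mid n)
  also have "?K 0 = kdelta (r x (hd as), tl as, y) g" by (simp add: face0)
  also have "?K (Suc n) = (-1) ^ length as * kdelta (x, butlast as, l (last as) y) g"
    by (simp add: face_last n)
  finally show "bar_d_basis m r l (x,as,y) g = (\<Sum>j\<le>length as. ?K j)"
    unfolding bar_d_basis_def using assms n by simp
qed

lemma d_nil: "bar_d_basis m r l (x,[],y) = (\<lambda>_. 0)"
  by (simp add: bar_d_basis_def)

lemma len_face: "as \<noteq> [] \<Longrightarrow> j \<le> length as \<Longrightarrow> length (fst (snd (face m r l j (x,as,y)))) = length as - 1"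
  by (auto simp: face_def)

lemma kspan_gen: "s \<in> S \<Longrightarrow> s \<in> kspan S"
proof -
  assume "s \<in> S"
  then have "(\<lambda>g. 1 * s g + 0) \<in> kspan S" by (intro kspan.step kspan.zero)
  then show ?thesis by simp
qed

lemma kspan_add: "t \<in> kspan S \<Longrightarrow> u \<in> kspan S \<Longrightarrow> (\<lambda>g. t g + u g) \<in> kspan S"
proof (induction t rule: kspan.induct)
  case zero then show ?case by simp
next
  case (step s t c)
  then have "(\<lambda>g. c * s g + (t g + u g)) \<in> kspan S" by (intro kspan.step) auto
  then show ?case by (simp add: add.assoc)
qed

lemma kspan_scale: "t \<in> kspan S \<Longrightarrow> (\<lambda>g. a * t g) \<in> kspan S"
proof (induction t rule: kspan.induct)
  case zero then show ?case using kspan.zero by simp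
next
  case (step s t c)
  then have "(\<lambda>g. (a * c) * s g + a * t g) \<in> kspan S" by (intro kspan.step) auto
  then show ?case by (simp add: ring_distribs mult.assoc)
qed

lemma kspan_diff: "t \<in> kspan S \<Longrightarrow> u \<in> kspan S \<Longrightarrow> (\<lambda>g. t g - u g) \<in> kspan S"
  using kspan_add[of t S "\<lambda>g. (-1) * u g"] kspan_scale[of u S "-1"] by simp

lemma kspan_sum: "finite I \<Longrightarrow> (\<And>i. i \<in> I \<Longrightarrow> t i \<in> kspan S) \<Longrightarrow> (\<lambda>g. \<Sum>i\<in>I. t i g) \<in> kspan S"
proof (induction I rule: finite_induct)
  case empty then show ?case using kspan.zero by simp
next
  case (insert x F)
  then show ?case using kspan_add[of "t x" S "\<lambda>g. \<Sum>i\<in>F. t i g"] by simp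
qed

lemma kspan_fin: "(\<And>s. s \<in> S \<Longrightarrow> fin s) \<Longrightarrow> t \<in> kspan S \<Longrightarrow> fin t"
proof -
  assume a: "\<And>s. s \<in> S \<Longrightarrow> fin s"
  show "t \<in> kspan S \<Longrightarrow> fin t"
  proof (induction t rule: kspan.induct)
    case zero then show ?case by (rule fin_zero)
  next
    case (step s t c)
    then show ?case using a by (intro fin_add fin_scale) auto
  qed
qed

lemma kspan_lin_ext:
  fixes S :: "('b \<Rightarrow> 'k::field) set"
  assumes fS: "\<And>s. s \<in> S \<Longrightarrow> fin s" and im: "\<And>s. s \<in> S \<Longrightarrow> lin_ext T s \<in> kspan S'"
  shows "t \<in> kspan S \<Longrightarrow> lin_ext T t \<in> kspan S'"
proof (induction t rule: kspan.induct)
  case zero then show ?case by (simp add: lin_ext_zero kspan.zero)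
next
  case (step s t c)
  have ft: "fin t" using kspan_fin[OF fS step(2)] .
  have fs: "fin s" using fS step(1) .
  have "lin_ext T (\<lambda>g. c * s g + t g) = (\<lambda>g. c * lin_ext T s g + lin_ext T t g)"
    using lin_ext_add[OF fin_scale[OF fs, of c] ft, of T] lin_ext_scale[OF fs, of T c] by simp
  moreover have "(\<lambda>g. c * lin_ext T s g + lin_ext T t g) \<in> kspan S'"
    using kspan_add[OF kspan_scale[OF im[OF step(1)]] step(3)] .
  ultimately show ?case by simp
qed

lemma fin3: "fin (\<lambda>g. kdelta a g - kdelta b g - (kdelta c g :: 'k::field))"
  by (intro fin_diff fin_kdelta)
lemma fin2: "fin (\<lambda>g. kdelta a g - d * (kdelta b g :: 'k::field))"
  by (intro fin_diff fin_kdelta fin_scale)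

lemma gens_fin: "s \<in> bar_rel_gens addA sA oneA actX actY n \<Longrightarrow> fin s"
  unfolding bar_rel_gens_def
  by (auto simp only: fin3 fin2)

lemma rel_fin: "t \<in> kspan (bar_rel_gens addA sA oneA actX actY n) \<Longrightarrow> fin t"
  by (rule kspan_fin[OF gens_fin])

lemma chains_iff: "f \<in> bar_chains n \<longleftrightarrow> fin f \<and> (\<forall>b. f b \<noteq> 0 \<longrightarrow> length (fst (snd b)) = n)"
  unfolding bar_chains_def fsp_def by auto

lemma chains_fin: "f \<in> bar_chains n \<Longrightarrow> fin f"
  by (simp add: chains_iff)

lemma chains_len: "f \<in> bar_chains n \<Longrightarrow> f (x,as,y) \<noteq> 0 \<Longrightarrow> length as = n"
  by (auto simp: bar_chains_def)

lemma chains_kdelta: "length as = n \<Longrightarrow> kdelta (x,as,y) \<in> bar_chains n"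
  using fin_kdelta[of "(x,as,y)"] by (auto simp: chains_iff kdelta_def)

lemma chains_zero: "(\<lambda>_. 0) \<in> bar_chains n"
  by (auto simp: chains_iff fin_zero)

lemma chains_add: "f \<in> bar_chains n \<Longrightarrow> g \<in> bar_chains n \<Longrightarrow> (\<lambda>b. f b + g b :: 'k::field) \<in> bar_chains n"
  unfolding chains_iff
proof (intro conjI allI impI)
  assume a: "fin f \<and> (\<forall>b. f b \<noteq> 0 \<longrightarrow> length (fst (snd b)) = n)" "fin g \<and> (\<forall>b. g b \<noteq> 0 \<longrightarrow> length (fst (snd b)) = n)"
  then show "fin (\<lambda>b. f b + g b)" by (intro fin_add) auto
  fix b assume "f b + g b \<noteq> 0"
  then have "f b \<noteq> 0 \<or> g b \<noteq> 0" by auto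
  then show "length (fst (snd b)) = n" using a by blast
qed

lemma chains_scale: "f \<in> bar_chains n \<Longrightarrow> (\<lambda>b. a * f b :: 'k::field) \<in> bar_chains n"
  by (auto simp: chains_iff intro: fin_scale)

lemma chains_sum: "finite I \<Longrightarrow> (\<And>i. i \<in> I \<Longrightarrow> f i \<in> bar_chains n) \<Longrightarrow> (\<lambda>b. \<Sum>i\<in>I. f i b :: 'k::field) \<in> bar_chains n"
proof (induction I rule: finite_induct)
  case empty then show ?case using chains_zero by simp
next
  case (insert x F)
  then show ?case using chains_add[of "f x" n "\<lambda>b. \<Sum>i\<in>F. f i b"] by simp
qed

lemma chains_lin_ext:
  fixes f :: "_ \<Rightarrow> 'k::field"
  assumes "fin f" "\<And>b. f b \<noteq> 0 \<Longrightarrow> T b \<in> bar_chains m"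
  shows "lin_ext T f \<in> bar_chains m"
proof -
  have "lin_ext T f = (\<lambda>c. \<Sum>b\<in>fsp f. f b * T b c)"
    unfolding lin_ext_def fsp_def by simp
  moreover have "(\<lambda>c. \<Sum>b\<in>fsp f. f b * T b c) \<in> bar_chains m"
    by (rule chains_sum[OF assms(1)]) (rule chains_scale, auto simp: fsp_def intro: assms(2))
  ultimately show ?thesis by simp
qed

lemma d_chains:
  "length as = Suc n \<Longrightarrow> bar_d_basis m r l (x,as,y) \<in> bar_chains n"
  apply (subst d_face, force)
  apply (rule chains_sum, simp)
  apply (rule chains_scale)
  apply (case_tac "face m r l j (x, as, y)")
  apply (auto intro!: chains_kdelta)
  apply (metis len_face[of as _ m r l x y] Nil_is_append_conv diff_Suc_1 fst_conv snd_conv length_0_conv nat.distinct(1))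
  done

lemma d_fin: "fin (bar_d_basis m r l b :: _ \<Rightarrow> 'k::field)"
proof (cases b)
  case (fields x as y)
  show ?thesis
  proof (cases as)
    case Nil then show ?thesis using fields by (simp add: d_nil fin_zero)
  next
    case (Cons a as')
    have "(bar_d_basis m r l (x, as, y) :: _ \<Rightarrow> 'k) \<in> bar_chains (length as')"
      by (rule d_chains) (simp add: Cons)
    then show ?thesis using fields by (simp add: chains_iff)
  qed
qed

lemma dlin_chains:
  fixes f :: "_ \<Rightarrow> 'k::field"
  assumes f: "f \<in> bar_chains (Suc n)"
  shows "lin_ext (bar_d_basis m r l) f \<in> bar_chains n"
proof (rule chains_lin_ext)
  show "fin f" using f by (simp add: chains_iff)
  fix b assume "f b \<noteq> 0"
  then obtain x as y where b: "b = (x,as,y)" "length as = Suc n" using f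
    by (cases b) (auto simp: chains_iff)
  show "bar_d_basis m r l b \<in> bar_chains n" unfolding b by (rule d_chains[OF b(2)])
qed

definition mapt :: "('a \<Rightarrow> 'b) \<Rightarrow> 'x \<times> 'a list \<times> 'y \<Rightarrow> 'x \<times> 'b list \<times> 'y" where
  "mapt F t = (case t of (x,as,y) \<Rightarrow> (x, map F as, y))"

definition push :: "('b \<Rightarrow> 'c) \<Rightarrow> ('b \<Rightarrow> 'k::field) \<Rightarrow> 'c \<Rightarrow> 'k" where
  "push M f = lin_ext (\<lambda>b. kdelta (M b)) f"

lemma push_fin: "fin f \<Longrightarrow> fin (push M f)"
  unfolding push_def by (rule fin_lin_ext) (auto intro: fin_kdelta)

lemma push_chains:
  assumes "fin f" "\<And>b. f b \<noteq> 0 \<Longrightarrow> length (fst (snd (M b))) = m"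
  shows "push M f \<in> bar_chains m"
  unfolding push_def
proof (rule chains_lin_ext[OF assms(1)])
  fix b assume "f b \<noteq> 0"
  then have "length (fst (snd (M b))) = m" by (rule assms(2))
  then show "kdelta (M b) \<in> bar_chains m"
    by (cases "M b") (auto intro: chains_kdelta)
qed

lemma push_add: "fin f \<Longrightarrow> fin g \<Longrightarrow> push M (\<lambda>b. f b + g b) = (\<lambda>c. push M f c + push M g c)"
  unfolding push_def by (rule lin_ext_add)

lemma push_scale: "fin f \<Longrightarrow> push M (\<lambda>b. a * f b) = (\<lambda>c. a * push M f c)"
  unfolding push_def by (rule lin_ext_scale)

lemma push_kdelta: "push M (kdelta b) = kdelta (M b)"
  unfolding push_def by (rule lin_ext_kdelta)

lemma push_zero: "push M (\<lambda>_. 0) = (\<lambda>_. 0)"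
  unfolding push_def by (rule lin_ext_zero)

lemma push_3: "push M (\<lambda>g. kdelta a g - kdelta b g - kdelta c g) = (\<lambda>g. kdelta (M a) g - kdelta (M b) g - kdelta (M c) g)"
  unfolding push_def
  by (simp add: lin_ext_diff fin_diff fin_kdelta lin_ext_kdelta)

lemma push_2: "push M (\<lambda>g. kdelta a g - d * kdelta b g) = (\<lambda>g. kdelta (M a) g - d * kdelta (M b) g)"
  unfolding push_def
  by (simp add: lin_ext_diff lin_ext_scale fin_diff fin_scale fin_kdelta lin_ext_kdelta)

lemma push_sumk: "finite I \<Longrightarrow> push M (\<lambda>g. \<Sum>i\<in>I. c i * kdelta (t i) g) = (\<lambda>g. \<Sum>i\<in>I. c i * kdelta (M (t i)) g)"
  unfolding push_def
  by (subst lin_ext_sum) (auto intro: fin_scale fin_kdelta simp: lin_ext_scale fin_kdelta lin_ext_kdelta)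

lemma push_comp: "fin f \<Longrightarrow> push M (push N f) = push (\<lambda>b. M (N b)) f"
  unfolding push_def
  by (subst lin_ext_comp) (auto intro: fin_kdelta simp: lin_ext_kdelta)

lemma push_id: "fin f \<Longrightarrow> (\<And>b. f b \<noteq> 0 \<Longrightarrow> M b = b) \<Longrightarrow> push M f = f"
  unfolding push_def
  by (subst lin_ext_cong[of f _ kdelta]) (auto simp: lin_ext_id)

lemma face_mapt:
  assumes r: "\<And>x a. rB x (F a) = rA x a" and l: "\<And>a y. lB (F a) y = lA a y"
    and m: "\<And>a b. F (mA a b) = mB (F a) (F b)" and ne: "as \<noteq> []"
  shows "mapt F (face mA rA lA j (x,as,y)) = face mB rB lB j (x, map F as, y)"
proof -
  consider "j = 0" | "0 < j" "j < length as" | "0 < j" "length as \<le> j" by linarith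
  then show ?thesis
  proof cases
    case 1 then show ?thesis using ne by (simp add: face0 mapt_def hd_map map_tl r)
  next
    case 2 then show ?thesis by (simp add: face_mid mapt_def take_map drop_map m)
  next
    case 3 then show ?thesis using ne by (simp add: face_last mapt_def map_butlast last_map l)
  qed
qed

lemma d_push:
  assumes r: "\<And>x a. rB x (F a) = rA x a" and l: "\<And>a y. lB (F a) y = lA a y"
    and m: "\<And>a b. F (mA a b) = mB (F a) (F b)"
  shows "push (mapt F) (bar_d_basis mA rA lA b :: _ \<Rightarrow> 'k::field) = bar_d_basis mB rB lB (mapt F b)"
proof -
  obtain x as y where b: "b = (x,as,y)" by (cases b)
  show ?thesis
  proof (cases "as = []")
    case True then show ?thesis by (simp add: b mapt_def d_nil push_zero)
  next
    case False
    have "push (mapt F) (bar_d_basis mA rA lA b :: _ \<Rightarrow> 'k) = 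
      (\<lambda>g. \<Sum>j\<le>length as. (-1)^j * kdelta (mapt F (face mA rA lA j (x,as,y))) g)"
      unfolding b d_face[OF False] by (rule push_sumk) simp
    also have "\<dots> = (\<lambda>g. \<Sum>j\<le>length as. (-1)^j * kdelta (face mB rB lB j (x, map F as,y)) g)"
      by (simp add: face_mapt[where rB=rB and rA=rA and lB=lB and lA=lA and F=F and mA=mA and mB=mB, OF r l m False])
    also have "\<dots> = bar_d_basis mB rB lB (mapt F b)"
      using False by (simp add: b mapt_def d_face)
    finally show ?thesis .
  qed
qed

lemma chain_map:
  assumes r: "\<And>x a. rB x (F a) = rA x a" and l: "\<And>a y. lB (F a) y = lA a y"
    and m: "\<And>a b. F (mA a b) = mB (F a) (F b)" and w: "fin (w :: _ \<Rightarrow> 'k::field)"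
  shows "lin_ext (bar_d_basis mB rB lB) (push (mapt F) w) = push (mapt F) (lin_ext (bar_d_basis mA rA lA) w)"
proof -
  have "lin_ext (bar_d_basis mB rB lB) (push (mapt F) w) = lin_ext (\<lambda>b. lin_ext (bar_d_basis mB rB lB) (kdelta (mapt F b))) w"
    unfolding push_def by (rule lin_ext_comp[OF w]) (rule fin_kdelta)
  also have "\<dots> = lin_ext (\<lambda>b. push (mapt F) (bar_d_basis mA rA lA b)) w"
    by (simp add: lin_ext_kdelta d_push[where rB=rB and rA=rA and lB=lB and lA=lA and F=F and mA=mA and mB=mB, OF r l m])
  also have "\<dots> = push (mapt F) (lin_ext (bar_d_basis mA rA lA) w)"
    unfolding push_def by (rule lin_ext_comp[OF w, symmetric]) (rule d_fin)
  finally show ?thesis .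
qed

lemma push_kspan:
  assumes "\<And>s. s \<in> S \<Longrightarrow> fin s" "\<And>s. s \<in> S \<Longrightarrow> push M s \<in> kspan S'"
  shows "t \<in> kspan S \<Longrightarrow> push M t \<in> kspan S'"
  unfolding push_def by (rule kspan_lin_ext[OF assms[unfolded push_def]])

definition Hb :: "('a \<Rightarrow> 'a) \<Rightarrow> 'a \<Rightarrow> 'x\<times>'a list\<times>'y \<Rightarrow> 'x\<times>'a list\<times>'y \<Rightarrow> 'k::field" where
  "Hb cf u b = (\<lambda>g. \<Sum>i\<le>length (fst (snd b)). (-1)^i * kdelta (ht cf u i b) g)"

lemma ht_simp: "ht cf u i (x,as,y) = (x, hL cf u i as, y)"
  by (simp add: ht_def)

lemma hom_basis:
  fixes m :: "'a \<Rightarrow> 'a \<Rightarrow> 'a" and r :: "'x \<Rightarrow> 'a \<Rightarrow> 'x" and l :: "'a \<Rightarrow> 'y \<Rightarrow> 'y"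
  assumes H1: "\<And>a b. m (cf a) (cf b) = cf (m a b)"
    and H2: "\<And>a. m (cf a) u = cf a" and H3: "\<And>a. m u a = cf a"
    and H4: "\<And>x. r x u = x" and H5: "\<And>x a. r x (cf a) = r x a" and H6: "\<And>y. l u y = y"
  shows "lin_ext (bar_d_basis m r l) (Hb cf u b) g + lin_ext (Hb cf u) (bar_d_basis m r l b) g
     = kdelta b g - (kdelta (mapt cf b) g :: 'k::field)"
proof -
  obtain x as y where b: "b = (x,as,y)" by (cases b)
  define n where "n = length as"
  define F where "F i j = (kdelta (face m r l j (ht cf u i b)) g :: 'k)" for i j
  define G where "G i j = (kdelta (ht cf u i (face m r l j b)) g :: 'k)" for i j
  define A where "A i = (kdelta (x, map cf (take i as) @ drop i as, y) g :: 'k)" for i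
  have T1: "lin_ext (bar_d_basis m r l) (Hb cf u b) g = (\<Sum>i\<le>n. (-1)^i * (\<Sum>j\<le>Suc n. (-1)^j * F i j))"
  proof -
    have "lin_ext (bar_d_basis m r l) (Hb cf u b) = (\<lambda>g. \<Sum>i\<le>n. lin_ext (bar_d_basis m r l) (\<lambda>g. (-1)^i * kdelta (ht cf u i b) g) g :: 'k)"
      unfolding Hb_def b n_def by (subst lin_ext_sum) (auto intro: fin_scale fin_kdelta)
    also have "\<dots> = (\<lambda>g. \<Sum>i\<le>n. (-1)^i * bar_d_basis m r l (ht cf u i b) g :: 'k)"
      by (simp add: lin_ext_scale fin_kdelta lin_ext_kdelta)
    finally have e: "lin_ext (bar_d_basis m r l) (Hb cf u b) g = (\<Sum>i\<le>n. (-1)^i * bar_d_basis m r l (ht cf u i b) g :: 'k)"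
      by simp
    show ?thesis unfolding e
    proof (intro sum.cong refl)
      fix i
      have "hL cf u i as \<noteq> []" by (simp add: hL_def)
      then show "(-1)^i * bar_d_basis m r l (ht cf u i b) g = (-1)^i * (\<Sum>j\<le>Suc n. (-1)^j * F i j)"
        unfolding F_def b ht_simp by (simp add: d_face n_def)
    qed
  qed
  have T2: "lin_ext (Hb cf u) (bar_d_basis m r l b) g = (\<Sum>j\<le>n. (-1)^j * (\<Sum>i<n. (-1)^i * G i j))"
  proof (cases "as = []")
    case True
    then show ?thesis by (simp add: b d_nil lin_ext_zero n_def)
  next
    case False
    then have n0: "0 < n" unfolding n_def by simp
    have "lin_ext (Hb cf u) (bar_d_basis m r l b) = (\<lambda>g. \<Sum>j\<le>n. lin_ext (Hb cf u) (\<lambda>g. (-1)^j * kdelta (face m r l j b) g) g :: 'k)"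
      unfolding b d_face[OF False] n_def by (subst lin_ext_sum) (auto intro: fin_scale fin_kdelta)
    also have "\<dots> = (\<lambda>g. \<Sum>j\<le>n. (-1)^j * Hb cf u (face m r l j b) g :: 'k)"
      by (simp add: lin_ext_scale fin_kdelta lin_ext_kdelta)
    finally have e: "lin_ext (Hb cf u) (bar_d_basis m r l b) g = (\<Sum>j\<le>n. (-1)^j * Hb cf u (face m r l j b) g :: 'k)"
      by simp
    show ?thesis unfolding e
    proof (intro sum.cong refl)
      fix j assume "j \<in> {..n}"
      then have "length (fst (snd (face m r l j b))) = n - 1"
        unfolding b n_def using len_face[OF False] by simp
      moreover have "{..n - 1} = {..<n}" using n0 by auto
      ultimately show "(-1)^j * Hb cf u (face m r l j b) g = (-1)^j * (\<Sum>i<n. (-1)^i * G i j)"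
        unfolding Hb_def G_def by simp
    qed
  qed
  have "(\<Sum>i\<le>n. (-1)^i * (\<Sum>j\<le>Suc n. (-1)^j * F i j)) + (\<Sum>j\<le>n. (-1)^j * (\<Sum>i<n. (-1)^i * G i j)) = A 0 - A (Suc n)"
  proof (rule comb)
    show "\<forall>i\<le>n. \<forall>j<i. F i j = G (i - 1) j"
      unfolding F_def G_def b n_def using S1[where m=m and c=cf and r=r and u=u and l=l, OF H1 H5] by auto
    show "\<forall>i\<le>n. F i i = A i"
      unfolding F_def A_def b n_def ht_simp using S2[where m=m and c=cf and r=r and u=u and l=l, OF H2 H4] by auto
    show "\<forall>i\<le>n. F i (Suc i) = A (Suc i)"
      unfolding F_def A_def b n_def ht_simp using S3[where m=m and c=cf and r=r and u=u and l=l, OF H3 H6] by auto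
    show "\<forall>i\<le>n. \<forall>j. Suc i < j \<and> j \<le> Suc n \<longrightarrow> F i j = G i (j - 1)"
      unfolding F_def G_def b n_def using S4[where m=m and c=cf and r=r and u=u and l=l] by auto
  qed
  moreover have "A 0 = kdelta b g" by (simp add: A_def b)
  moreover have "A (Suc n) = kdelta (mapt cf b) g" by (simp add: A_def b mapt_def n_def)
  ultimately show ?thesis using T1 T2 by simp
qed

lemma lin_ext_plusT: "lin_ext (\<lambda>b g. T1 b g + T2 b g) f = (\<lambda>g. lin_ext T1 f g + lin_ext T2 f g)"
  unfolding lin_ext_def by (simp add: ring_distribs sum.distrib)

lemma lin_ext_minusT: "lin_ext (\<lambda>b g. T1 b g - T2 b g) f = (\<lambda>g. lin_ext T1 f g - lin_ext T2 f g)"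
  unfolding lin_ext_def by (simp add: ring_distribs sum_subtractf)

lemma Hb_fin: "fin (Hb cf u b :: _ \<Rightarrow> 'k::field)"
  unfolding Hb_def by (rule fin_sum) (auto intro: fin_scale fin_kdelta)

lemma hom_chain:
  fixes m :: "'a \<Rightarrow> 'a \<Rightarrow> 'a" and r :: "'x \<Rightarrow> 'a \<Rightarrow> 'x" and l :: "'a \<Rightarrow> 'y \<Rightarrow> 'y"
  assumes H1: "\<And>a b. m (cf a) (cf b) = cf (m a b)"
    and H2: "\<And>a. m (cf a) u = cf a" and H3: "\<And>a. m u a = cf a"
    and H4: "\<And>x. r x u = x" and H5: "\<And>x a. r x (cf a) = r x a" and H6: "\<And>y. l u y = y"
    and f: "fin (f :: _ \<Rightarrow> 'k::field)"
  shows "(\<lambda>g. lin_ext (bar_d_basis m r l) (lin_ext (Hb cf u) f) g + lin_ext (Hb cf u) (lin_ext (bar_d_basis m r l) f) g)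
     = (\<lambda>g. f g - push (mapt cf) f g)"
proof -
  have "lin_ext (bar_d_basis m r l) (lin_ext (Hb cf u) f) = lin_ext (\<lambda>b. lin_ext (bar_d_basis m r l) (Hb cf u b)) f"
    by (rule lin_ext_comp[OF f Hb_fin])
  moreover have "lin_ext (Hb cf u) (lin_ext (bar_d_basis m r l) f) = lin_ext (\<lambda>b. lin_ext (Hb cf u) (bar_d_basis m r l b)) f"
    by (rule lin_ext_comp[OF f d_fin])
  moreover have "lin_ext (\<lambda>b g. lin_ext (bar_d_basis m r l) (Hb cf u b) g + lin_ext (Hb cf u) (bar_d_basis m r l b) g) f
      = lin_ext (\<lambda>b g. kdelta b g - kdelta (mapt cf b) g) f"
    apply (rule arg_cong[where f="\<lambda>T. lin_ext T f"])
    apply (intro ext)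
    apply (rule hom_basis[where m=m and r=r and l=l and cf=cf and u=u, OF H1 H2 H3 H4 H5 H6])
    done
  ultimately show ?thesis
    unfolding push_def using lin_ext_plusT[of "\<lambda>b. lin_ext (bar_d_basis m r l) (Hb cf u b)" "\<lambda>b. lin_ext (Hb cf u) (bar_d_basis m r l b)" f]
      lin_ext_minusT[of kdelta "\<lambda>b. kdelta (mapt cf b)" f] lin_ext_id[OF f]
    by (metis (no_types, lifting))
qed

lemma chains_diff: "f \<in> bar_chains n \<Longrightarrow> g \<in> bar_chains n \<Longrightarrow> (\<lambda>b. f b - g b :: 'k::field) \<in> bar_chains n"
proof -
  assume f: "f \<in> bar_chains n" and g: "g \<in> bar_chains n"
  have "(\<lambda>b. f b + (-1) * g b :: 'k) \<in> bar_chains n"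
    by (rule chains_add[OF f chains_scale[OF g]])
  moreover have "(\<lambda>b. f b + (-1) * g b :: 'k) = (\<lambda>b. f b - g b)" by (rule ext) simp
  ultimately show ?thesis by simp
qed

lemma Hb_chains: "length as = n \<Longrightarrow> (Hb cf u (x,as,y) :: _ \<Rightarrow> 'k::field) \<in> bar_chains (Suc n)"
  unfolding Hb_def
  apply (rule chains_sum, simp)
  apply (rule chains_scale)
  apply (simp only: ht_simp)
  apply (rule chains_kdelta)
  apply simp
  done

lemma Hm_chains:
  assumes f: "f \<in> bar_chains n"
  shows "lin_ext (Hb cf u) (f :: _ \<Rightarrow> 'k::field) \<in> bar_chains (Suc n)"
proof (rule chains_lin_ext)
  show "fin f" using f by (rule chains_fin)
  fix b assume "f b \<noteq> 0"
  then have ln: "length (fst (snd b)) = n" using f unfolding chains_iff by blast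
  obtain x as y where b: "b = (x,as,y)" by (cases b)
  show "Hb cf u b \<in> bar_chains (Suc n)" unfolding b by (rule Hb_chains) (use ln b in simp)
qed

lemma Hm_eq:
  assumes f: "f \<in> bar_chains n"
  shows "lin_ext (Hb cf u) (f :: _ \<Rightarrow> 'k::field) = (\<lambda>g. \<Sum>i\<le>n. (-1)^i * push (ht cf u i) f g)"
proof -
  have "lin_ext (Hb cf u) f = lin_ext (\<lambda>b g. \<Sum>i\<le>n. (-1)^i * kdelta (ht cf u i b) g) f"
  proof (rule lin_ext_cong)
    fix b assume "f b \<noteq> 0"
    then have "length (fst (snd b)) = n" using f unfolding chains_iff by blast
    then show "Hb cf u b = (\<lambda>g. \<Sum>i\<le>n. (-1)^i * kdelta (ht cf u i b) g)" unfolding Hb_def by simp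
  qed
  also have "\<dots> = (\<lambda>g. \<Sum>i\<le>n. (-1)^i * push (ht cf u i) f g)"
  proof
    fix g
    have "lin_ext (\<lambda>b g. \<Sum>i\<le>n. (-1)^i * kdelta (ht cf u i b) g) f g
       = (\<Sum>b\<in>{b. f b \<noteq> 0}. \<Sum>i\<le>n. (-1)^i * (f b * kdelta (ht cf u i b) g))"
      unfolding lin_ext_def by (simp add: sum_distrib_left mult.left_commute)
    also have "\<dots> = (\<Sum>i\<le>n. \<Sum>b\<in>{b. f b \<noteq> 0}. (-1)^i * (f b * kdelta (ht cf u i b) g))"
      by (rule sum.swap)
    also have "\<dots> = (\<Sum>i\<le>n. (-1)^i * push (ht cf u i) f g)"
      unfolding push_def lin_ext_def by (simp add: sum_distrib_left)
    finally show "lin_ext (\<lambda>b g. \<Sum>i\<le>n. (-1)^i * kdelta (ht cf u i b) g) f g = (\<Sum>i\<le>n. (-1)^i * push (ht cf u i) f g)" .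
  qed
  finally show ?thesis .
qed

lemma gens_chains: "s \<in> bar_rel_gens addA sA oneA actX actY n \<Longrightarrow> (s :: _ \<Rightarrow> 'k::field) \<in> bar_chains n"
  unfolding bar_rel_gens_def
  apply (elim UnE CollectE exE conjE)
  apply (hypsubst, (intro chains_diff chains_scale chains_kdelta; simp))+
  done

lemma Hm_kspan:
  assumes ht_gens: "\<And>i s. i \<le> n \<Longrightarrow> s \<in> bar_rel_gens addA sA oneA actX actY n \<Longrightarrow>
       push (ht cf u i) s \<in> kspan (bar_rel_gens addA sA oneA actX actY (Suc n))"
    and t: "t \<in> kspan (bar_rel_gens addA sA oneA actX actY n)"
  shows "lin_ext (Hb cf u) (t :: _ \<Rightarrow> 'k::field) \<in> kspan (bar_rel_gens addA sA oneA actX actY (Suc n))"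
proof (rule kspan_lin_ext[OF gens_fin _ t])
  fix s assume s: "s \<in> bar_rel_gens addA sA oneA actX actY n"
  have "lin_ext (Hb cf u) s = (\<lambda>g. \<Sum>i\<le>n. (-1)^i * push (ht cf u i) s g)"
    by (rule Hm_eq[OF gens_chains[OF s]])
  also have "\<dots> \<in> kspan (bar_rel_gens addA sA oneA actX actY (Suc n))"
    apply (rule kspan_sum, simp)
    apply (rule kspan_scale)
    apply (rule ht_gens[OF _ s])
    apply simp
    done
  finally show "lin_ext (Hb cf u) s \<in> kspan (bar_rel_gens addA sA oneA actX actY (Suc n))" .
qed

lemma hL_upd: 
  assumes k: "k < length as"
  shows "hL c u i (as[k:=v]) = (hL c u i as)[(if k < i then k else Suc k) := (if k < i then c v else v)]"
proof (cases "k < i")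
  case True
  have l: "k < length (map c (take i as))" using True k by simp
  show ?thesis using True unfolding hL_def
    by (simp add: take_update_swap map_update list_update_append1[OF l])
next
  case False
  have l: "length (map c (take i as)) = i" using False k by simp
  have m: "min (length as) i = i" using False k by simp
  have "Suc k - i = Suc (k - i)" using False by simp
  then show ?thesis using False unfolding hL_def
    by (simp add: drop_update_swap list_update_append l m)
qed

lemma gens_map:
  fixes M :: "'x::ab_group_add \<times> 'a list \<times> 'y::ab_group_add \<Rightarrow> 'x \<times> 'b list \<times> 'y"
  assumes M: "\<And>x as y. M (x,as,y) = (x, LM as, y)"
    and len: "\<And>as. length as = n \<Longrightarrow> length (LM as) = n'"
    and upd: "\<And>as k v. length as = n \<Longrightarrow> k < n \<Longrightarrow> LM (as[k:=v]) = (LM as)[\<kappa> k := \<nu> k v]"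
    and kap: "\<And>k. k < n \<Longrightarrow> \<kappa> k < n'"
    and nadd: "\<And>k a b. k < n \<Longrightarrow> \<nu> k (addA a b) = addB (\<nu> k a) (\<nu> k b)"
    and nsc: "\<And>k c a. k < n \<Longrightarrow> \<nu> k (sA c a) = sB c (\<nu> k a)"
    and rX: "\<And>x c. aXA x (sA c oneA) = aXB x (sB c oneB)"
    and lY: "\<And>y c. aYA (sA c oneA) y = aYB (sB c oneB) y"
    and s: "s \<in> bar_rel_gens addA sA oneA aXA aYA n"
  shows "push M (s :: _ \<Rightarrow> 'k::field) \<in> bar_rel_gens addB sB oneB aXB aYB n'"
  using s unfolding bar_rel_gens_def
proof (elim UnE CollectE exE conjE)
  fix x x' as y assume e: "s = (\<lambda>g. kdelta (x + x', as, y) g - kdelta (x, as, y) g - kdelta (x', as, y) g)" and l: "length as = n"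
  have "push M s = (\<lambda>g. kdelta (x + x', LM as, y) g - kdelta (x, LM as, y) g - kdelta (x', LM as, y) g)"
    unfolding e push_3 M ..
  then have "push M s \<in> {\<lambda>g. kdelta (x + x', as, y) g - kdelta (x, as, y) g - kdelta (x', as, y) g | x x' as y. length as = n'}"
    by (intro CollectI exI conjI refl) (use len[OF l] in auto)
  then show "push M s \<in> {\<lambda>g. kdelta (x + x', as, y) g - kdelta (x, as, y) g - kdelta (x', as, y) g | x x' as y. length as = n'} \<union>
     {\<lambda>g. kdelta (aXB x (sB c oneB), as, y) g - c * kdelta (x, as, y) g | x c as y. length as = n'} \<union>
     {\<lambda>g. kdelta (x, as[i := addB a a'], y) g - kdelta (x, as[i := a], y) g - kdelta (x, as[i := a'], y) g | x as y i a a'. length as = n' \<and> i < n'} \<union>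
     {\<lambda>g. kdelta (x, as[i := sB c a], y) g - c * kdelta (x, as[i := a], y) g | x as y i a c. length as = n' \<and> i < n'} \<union>
     {\<lambda>g. kdelta (x, as, y + y') g - kdelta (x, as, y) g - kdelta (x, as, y') g | x as y y'. length as = n'} \<union>
     {\<lambda>g. kdelta (x, as, aYB (sB c oneB) y) g - c * kdelta (x, as, y) g | x c as y. length as = n'}"
    by blast
next
  fix x c as y assume e: "s = (\<lambda>g. kdelta (aXA x (sA c oneA), as, y) g - c * kdelta (x, as, y) g)" and l: "length as = n"
  have "push M s = (\<lambda>g. kdelta (aXB x (sB c oneB), LM as, y) g - c * kdelta (x, LM as, y) g)"
    unfolding e push_2 M rX ..
  then have "push M s \<in> {\<lambda>g. kdelta (aXB x (sB c oneB), as, y) g - c * kdelta (x, as, y) g | x c as y. length as = n'}"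
    by (intro CollectI exI conjI refl) (use len[OF l] in auto)
  then show "push M s \<in> {\<lambda>g. kdelta (x + x', as, y) g - kdelta (x, as, y) g - kdelta (x', as, y) g | x x' as y. length as = n'} \<union>
     {\<lambda>g. kdelta (aXB x (sB c oneB), as, y) g - c * kdelta (x, as, y) g | x c as y. length as = n'} \<union>
     {\<lambda>g. kdelta (x, as[i := addB a a'], y) g - kdelta (x, as[i := a], y) g - kdelta (x, as[i := a'], y) g | x as y i a a'. length as = n' \<and> i < n'} \<union>
     {\<lambda>g. kdelta (x, as[i := sB c a], y) g - c * kdelta (x, as[i := a], y) g | x as y i a c. length as = n' \<and> i < n'} \<union>
     {\<lambda>g. kdelta (x, as, y + y') g - kdelta (x, as, y) g - kdelta (x, as, y') g | x as y y'. length as = n'} \<union>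
     {\<lambda>g. kdelta (x, as, aYB (sB c oneB) y) g - c * kdelta (x, as, y) g | x c as y. length as = n'}"
    by blast
next
  fix x as y i a a' assume e: "s = (\<lambda>g. kdelta (x, as[i := addA a a'], y) g - kdelta (x, as[i := a], y) g - kdelta (x, as[i := a'], y) g)"
    and l: "length as = n" and i: "i < n"
  have "push M s = (\<lambda>g. kdelta (x, (LM as)[\<kappa> i := addB (\<nu> i a) (\<nu> i a')], y) g - kdelta (x, (LM as)[\<kappa> i := \<nu> i a], y) g - kdelta (x, (LM as)[\<kappa> i := \<nu> i a'], y) g)"
    unfolding e push_3 M upd[OF l i] nadd[OF i] ..
  then have "push M s \<in> {\<lambda>g. kdelta (x, as[i := addB a a'], y) g - kdelta (x, as[i := a], y) g - kdelta (x, as[i := a'], y) g | x as y i a a'. length as = n' \<and> i < n'}"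
    by (intro CollectI exI conjI refl) (use len[OF l] kap[OF i] in auto)
  then show "push M s \<in> {\<lambda>g. kdelta (x + x', as, y) g - kdelta (x, as, y) g - kdelta (x', as, y) g | x x' as y. length as = n'} \<union>
     {\<lambda>g. kdelta (aXB x (sB c oneB), as, y) g - c * kdelta (x, as, y) g | x c as y. length as = n'} \<union>
     {\<lambda>g. kdelta (x, as[i := addB a a'], y) g - kdelta (x, as[i := a], y) g - kdelta (x, as[i := a'], y) g | x as y i a a'. length as = n' \<and> i < n'} \<union>
     {\<lambda>g. kdelta (x, as[i := sB c a], y) g - c * kdelta (x, as[i := a], y) g | x as y i a c. length as = n' \<and> i < n'} \<union>
     {\<lambda>g. kdelta (x, as, y + y') g - kdelta (x, as, y) g - kdelta (x, as, y') g | x as y y'. length as = n'} \<union>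
     {\<lambda>g. kdelta (x, as, aYB (sB c oneB) y) g - c * kdelta (x, as, y) g | x c as y. length as = n'}"
    by blast
next
  fix x as y i a c assume e: "s = (\<lambda>g. kdelta (x, as[i := sA c a], y) g - c * kdelta (x, as[i := a], y) g)"
    and l: "length as = n" and i: "i < n"
  have "push M s = (\<lambda>g. kdelta (x, (LM as)[\<kappa> i := sB c (\<nu> i a)], y) g - c * kdelta (x, (LM as)[\<kappa> i := \<nu> i a], y) g)"
    unfolding e push_2 M upd[OF l i] nsc[OF i] ..
  then have "push M s \<in> {\<lambda>g. kdelta (x, as[i := sB c a], y) g - c * kdelta (x, as[i := a], y) g | x as y i a c. length as = n' \<and> i < n'}"
    by (intro CollectI exI conjI refl) (use len[OF l] kap[OF i] in auto)
  then show "push M s \<in> {\<lambda>g. kdelta (x + x', as, y) g - kdelta (x, as, y) g - kdelta (x', as, y) g | x x' as y. length as = n'} \<union>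
     {\<lambda>g. kdelta (aXB x (sB c oneB), as, y) g - c * kdelta (x, as, y) g | x c as y. length as = n'} \<union>
     {\<lambda>g. kdelta (x, as[i := addB a a'], y) g - kdelta (x, as[i := a], y) g - kdelta (x, as[i := a'], y) g | x as y i a a'. length as = n' \<and> i < n'} \<union>
     {\<lambda>g. kdelta (x, as[i := sB c a], y) g - c * kdelta (x, as[i := a], y) g | x as y i a c. length as = n' \<and> i < n'} \<union>
     {\<lambda>g. kdelta (x, as, y + y') g - kdelta (x, as, y) g - kdelta (x, as, y') g | x as y y'. length as = n'} \<union>
     {\<lambda>g. kdelta (x, as, aYB (sB c oneB) y) g - c * kdelta (x, as, y) g | x c as y. length as = n'}"
    by blast
next
  fix x as y y' assume e: "s = (\<lambda>g. kdelta (x, as, y + y') g - kdelta (x, as, y) g - kdelta (x, as, y') g)" and l: "length as = n"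
  have "push M s = (\<lambda>g. kdelta (x, LM as, y + y') g - kdelta (x, LM as, y) g - kdelta (x, LM as, y') g)"
    unfolding e push_3 M ..
  then have "push M s \<in> {\<lambda>g. kdelta (x, as, y + y') g - kdelta (x, as, y) g - kdelta (x, as, y') g | x as y y'. length as = n'}"
    by (intro CollectI exI conjI refl) (use len[OF l] in auto)
  then show "push M s \<in> {\<lambda>g. kdelta (x + x', as, y) g - kdelta (x, as, y) g - kdelta (x', as, y) g | x x' as y. length as = n'} \<union>
     {\<lambda>g. kdelta (aXB x (sB c oneB), as, y) g - c * kdelta (x, as, y) g | x c as y. length as = n'} \<union>
     {\<lambda>g. kdelta (x, as[i := addB a a'], y) g - kdelta (x, as[i := a], y) g - kdelta (x, as[i := a'], y) g | x as y i a a'. length as = n' \<and> i < n'} \<union>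
     {\<lambda>g. kdelta (x, as[i := sB c a], y) g - c * kdelta (x, as[i := a], y) g | x as y i a c. length as = n' \<and> i < n'} \<union>
     {\<lambda>g. kdelta (x, as, y + y') g - kdelta (x, as, y) g - kdelta (x, as, y') g | x as y y'. length as = n'} \<union>
     {\<lambda>g. kdelta (x, as, aYB (sB c oneB) y) g - c * kdelta (x, as, y) g | x c as y. length as = n'}"
    by blast
next
  fix x c as y assume e: "s = (\<lambda>g. kdelta (x, as, aYA (sA c oneA) y) g - c * kdelta (x, as, y) g)" and l: "length as = n"
  have "push M s = (\<lambda>g. kdelta (x, LM as, aYB (sB c oneB) y) g - c * kdelta (x, LM as, y) g)"
    unfolding e push_2 M lY ..
  then have "push M s \<in> {\<lambda>g. kdelta (x, as, aYB (sB c oneB) y) g - c * kdelta (x, as, y) g | x c as y. length as = n'}"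
    by (intro CollectI exI conjI refl) (use len[OF l] in auto)
  then show "push M s \<in> {\<lambda>g. kdelta (x + x', as, y) g - kdelta (x, as, y) g - kdelta (x', as, y) g | x x' as y. length as = n'} \<union>
     {\<lambda>g. kdelta (aXB x (sB c oneB), as, y) g - c * kdelta (x, as, y) g | x c as y. length as = n'} \<union>
     {\<lambda>g. kdelta (x, as[i := addB a a'], y) g - kdelta (x, as[i := a], y) g - kdelta (x, as[i := a'], y) g | x as y i a a'. length as = n' \<and> i < n'} \<union>
     {\<lambda>g. kdelta (x, as[i := sB c a], y) g - c * kdelta (x, as[i := a], y) g | x as y i a c. length as = n' \<and> i < n'} \<union>
     {\<lambda>g. kdelta (x, as, y + y') g - kdelta (x, as, y) g - kdelta (x, as, y') g | x as y y'. length as = n'} \<union>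
     {\<lambda>g. kdelta (x, as, aYB (sB c oneB) y) g - c * kdelta (x, as, y) g | x c as y. length as = n'}"
    by blast
qed

lemma cycles_iff: "f \<in> bar_cycles addA multA sA oneA aX aY n \<longleftrightarrow> f \<in> bar_chains n \<and>
   (case n of 0 \<Rightarrow> True | Suc m \<Rightarrow> lin_ext (bar_d_basis multA aX aY) f \<in> kspan (bar_rel_gens addA sA oneA aX aY m))"
  unfolding bar_cycles_def by simp

lemma bounds_iff: "z \<in> bar_boundaries addA multA sA oneA aX aY n \<longleftrightarrow> (\<exists>h r. z = (\<lambda>g. lin_ext (bar_d_basis multA aX aY) h g + r g) \<and>
   h \<in> bar_chains (Suc n) \<and> r \<in> kspan (bar_rel_gens addA sA oneA aX aY n))"
  unfolding bar_boundaries_def by blast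

lemma mapt_len: "length (fst (snd (mapt F b))) = length (fst (snd b))"
  by (cases b) (simp add: mapt_def)

lemma push_mapt_chains: "f \<in> bar_chains n \<Longrightarrow> push (mapt F) f \<in> bar_chains n"
proof (rule push_chains)
  assume f: "f \<in> bar_chains n"
  then show "fin f" by (rule chains_fin)
  fix b assume "f b \<noteq> 0"
  then have "length (fst (snd b)) = n" using f unfolding chains_iff by blast
  then show "length (fst (snd (mapt F b))) = n" by (simp add: mapt_len)
qed

lemma d_zero_chains0:
  assumes "w \<in> bar_chains 0"
  shows "lin_ext (bar_d_basis m r l) w = (\<lambda>_. 0 :: 'k::field)"
proof -
  have "lin_ext (bar_d_basis m r l) w = lin_ext (\<lambda>_ _. 0) w"
  proof (rule lin_ext_cong)
    fix b assume "w b \<noteq> 0"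
    then have "length (fst (snd b)) = 0" using assms unfolding chains_iff by blast
    then show "bar_d_basis m r l b = (\<lambda>_. 0)" by (cases b) (simp add: d_nil)
  qed
  then show ?thesis by (simp add: lin_ext_def)
qed

theorem proposition1p1:
  fixes sP :: "'k::field \<Rightarrow> 'p::ring_1 \<Rightarrow> 'p"
    and sQ :: "'k \<Rightarrow> 'q::ring_1 \<Rightarrow> 'q"
    and \<phi> :: "'q \<Rightarrow> 'p"
    and actX :: "'x::ab_group_add \<Rightarrow> 'p \<Rightarrow> 'x"
    and actY :: "'p \<Rightarrow> 'y::ab_group_add \<Rightarrow> 'y"
    and n :: nat
  assumes "is_k_algebra sP" and "is_k_algebra sQ"
    and "is_unital_alg_hom sQ sP \<phi>"
    and "is_right_module actX" and "is_left_module actY"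
  shows "Tor_iso (cyl_add :: 'p \<times> 'q \<Rightarrow> _) (cyl_mult \<phi>) (cyl_scale sP sQ) cyl_one
                 (cyl_ract \<phi> actX) (cyl_lact \<phi> actY)
                 (+) (*) sP 1 actX actY n"
proof -
  have vP: "\<And>c a b. sP c (a + b) = sP c a + sP c b"
    using assms(1) unfolding is_k_algebra_def vector_space_def by blast
  have vQ: "\<And>c a b. sQ c (a + b) = sQ c a + sQ c b"
    using assms(2) unfolding is_k_algebra_def vector_space_def by blast
  have sP0: "\<And>c. sP c 0 = 0"
  proof -
    fix c have "sP c (0 + 0) = sP c 0 + sP c 0" by (rule vP)
    then show "sP c 0 = 0" by simp
  qed
  have sQ0: "\<And>c. sQ c 0 = 0"
  proof -
    fix c have "sQ c (0 + 0) = sQ c 0 + sQ c 0" by (rule vQ)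
    then show "sQ c 0 = 0" by simp
  qed
  have ph1: "\<phi> 1 = 1" and phm: "\<And>a b. \<phi> (a * b) = \<phi> a * \<phi> b"
    and pha: "\<And>a b. \<phi> (a + b) = \<phi> a + \<phi> b" and phs: "\<And>c a. \<phi> (sQ c a) = sP c (\<phi> a)"
    using assms(3) unfolding is_unital_alg_hom_def by auto
  have ph0: "\<phi> 0 = 0"
  proof -
    have "\<phi> (0 + 0) = \<phi> 0 + \<phi> 0" by (rule pha)
    then show ?thesis by simp
  qed
  have X1: "\<And>x. actX x 1 = x" and Xa: "\<And>x a b. actX x (a + b) = actX x a + actX x b"
    using assms(4) unfolding is_right_module_def by auto
  have X0: "\<And>x. actX x 0 = 0"
  proof -
    fix x have "actX x (0 + 0) = actX x 0 + actX x 0" by (rule Xa)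
    then show "actX x 0 = 0" by simp
  qed
  have Y1: "\<And>y. actY 1 y = y" and Ya: "\<And>y a b. actY (a + b) y = actY a y + actY b y"
    using assms(5) unfolding is_left_module_def by auto
  have Y0: "\<And>y. actY 0 y = 0"
  proof -
    fix y have "actY (0 + 0) y = actY 0 y + actY 0 y" by (rule Ya)
    then show "actY 0 y = 0" by simp
  qed
  define \<pi> where "\<pi> = (\<lambda>z::'p\<times>'q. fst z + \<phi> (snd z))"
  define \<iota> where "\<iota> = (\<lambda>p::'p. (p, 0::'q))"
  define cf where "cf = (\<lambda>z. \<iota> (\<pi> z))"
  define u where "u = \<iota> 1"
  define mZ where "mZ = cyl_mult \<phi>"
  define rZ where "rZ = cyl_ract \<phi> actX"
  define lZ where "lZ = cyl_lact \<phi> actY"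
  define sZ where "sZ = cyl_scale sP sQ"
  have rZ\<pi>: "\<And>x z. rZ x z = actX x (\<pi> z)" unfolding rZ_def cyl_ract_def \<pi>_def by (simp add: Xa)
  have lZ\<pi>: "\<And>z y. lZ z y = actY (\<pi> z) y" unfolding lZ_def cyl_lact_def \<pi>_def by (simp add: Ya)
  have m\<pi>: "\<And>a b. \<pi> (mZ a b) = \<pi> a * \<pi> b"
    unfolding mZ_def cyl_mult_def \<pi>_def by (simp add: phm pha ring_distribs add_ac)
  have a\<pi>: "\<And>a b. \<pi> (cyl_add a b) = \<pi> a + \<pi> b"
    unfolding cyl_add_def \<pi>_def by (simp add: pha add_ac)
  have s\<pi>: "\<And>c a. \<pi> (sZ c a) = sP c (\<pi> a)"
    unfolding sZ_def cyl_scale_def \<pi>_def by (simp add: phs vP)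
  have \<iota>m: "\<And>p q. mZ (\<iota> p) (\<iota> q) = \<iota> (p * q)"
    unfolding mZ_def cyl_mult_def \<iota>_def by (simp add: ph0)
  have r\<iota>: "\<And>x p. rZ x (\<iota> p) = actX x p" unfolding rZ_def cyl_ract_def \<iota>_def by (simp add: ph0 X0)
  have l\<iota>: "\<And>p y. lZ (\<iota> p) y = actY p y" unfolding lZ_def cyl_lact_def \<iota>_def by (simp add: ph0 Y0)
  have \<pi>\<iota>: "\<And>p. \<pi> (\<iota> p) = p" unfolding \<pi>_def \<iota>_def by (simp add: ph0)
  have \<iota>a: "\<And>p q. \<iota> (p + q) = cyl_add (\<iota> p) (\<iota> q)" unfolding \<iota>_def cyl_add_def by simp
  have \<iota>s: "\<And>c p. \<iota> (sP c p) = sZ c (\<iota> p)" unfolding \<iota>_def sZ_def cyl_scale_def by (simp add: sQ0)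
  have rone: "\<And>x c. rZ x (sZ c cyl_one) = actX x (sP c 1)"
    unfolding rZ\<pi> s\<pi> by (simp add: \<pi>_def cyl_one_def ph0 ph1)
  have lone: "\<And>y c. lZ (sZ c cyl_one) y = actY (sP c 1) y"
    unfolding lZ\<pi> s\<pi> by (simp add: \<pi>_def cyl_one_def ph0 ph1)
  have H1: "\<And>a b. mZ (cf a) (cf b) = cf (mZ a b)" unfolding cf_def by (simp add: \<iota>m m\<pi>)
  have H2: "\<And>a. mZ (cf a) u = cf a" unfolding cf_def u_def by (simp add: \<iota>m)
  have H3: "\<And>a. mZ u a = cf a"
    unfolding cf_def u_def mZ_def cyl_mult_def \<iota>_def \<pi>_def by (simp add: ph0)
  have H4: "\<And>x. rZ x u = x" unfolding u_def by (simp add: r\<iota> X1)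
  have H5: "\<And>x a. rZ x (cf a) = rZ x a" unfolding cf_def by (simp add: rZ\<pi> \<pi>\<iota>)
  have H6: "\<And>y. lZ u y = y" unfolding u_def by (simp add: l\<iota> Y1)
  have cfa: "\<And>a b. cf (cyl_add a b) = cyl_add (cf a) (cf b)" unfolding cf_def by (simp add: a\<pi> \<iota>a)
  have cfs: "\<And>c a. cf (sZ c a) = sZ c (cf a)" unfolding cf_def by (simp add: s\<pi> \<iota>s)

  define dZ where "dZ = (bar_d_basis mZ rZ lZ :: _ \<Rightarrow> _ \<Rightarrow> 'k)"
  define dP where "dP = (bar_d_basis (*) actX actY :: _ \<Rightarrow> _ \<Rightarrow> 'k)"
  define relZ where "relZ k = (bar_rel_gens cyl_add sZ cyl_one rZ lZ k :: ('x \<times> ('p\<times>'q) list \<times> 'y \<Rightarrow> 'k) set)" for k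
  define relP where "relP k = (bar_rel_gens (+) sP 1 actX actY k :: ('x \<times> 'p list \<times> 'y \<Rightarrow> 'k) set)" for k
  define F where "F = (push (mapt \<pi>) :: ('x \<times> ('p\<times>'q) list \<times> 'y \<Rightarrow> 'k) \<Rightarrow> _)"
  define G where "G = (push (mapt \<iota>) :: ('x \<times> 'p list \<times> 'y \<Rightarrow> 'k) \<Rightarrow> _)"
  define Hm where "Hm = (lin_ext (Hb cf u) :: ('x \<times> ('p\<times>'q) list \<times> 'y \<Rightarrow> 'k) \<Rightarrow> _)"

  have F_gen: "push (mapt \<pi>) s \<in> kspan (relP k)" if s: "s \<in> relZ k" for s k
    unfolding relP_def
    apply (rule kspan_gen)
    apply (rule gens_map[where LM="map \<pi>" and \<kappa>="\<lambda>k. k" and \<nu>="\<lambda>k. \<pi>" and n=k, OF _ _ _ _ _ _ _ _ s[unfolded relZ_def]])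
           apply (simp_all add: mapt_def map_update a\<pi> s\<pi> rZ\<pi> lZ\<pi>)
    unfolding \<pi>_def sZ_def cyl_scale_def cyl_one_def by (simp_all add: ph0 sP0 phs ph1)
  have F_rel: "F t \<in> kspan (relP k)" if t: "t \<in> kspan (relZ k)" for t k
    unfolding F_def
  proof (rule push_kspan[OF _ _ t])
    show "\<And>s. s \<in> relZ k \<Longrightarrow> fin s" unfolding relZ_def by (rule gens_fin)
    show "\<And>s. s \<in> relZ k \<Longrightarrow> push (mapt \<pi>) s \<in> kspan (relP k)" by (rule F_gen)
  qed
  have G_gen: "push (mapt \<iota>) s \<in> kspan (relZ k)" if s: "s \<in> relP k" for s k
    unfolding relZ_def
    apply (rule kspan_gen)
    apply (rule gens_map[where LM="map \<iota>" and \<kappa>="\<lambda>k. k" and \<nu>="\<lambda>k. \<iota>" and n=k, OF _ _ _ _ _ _ _ _ s[unfolded relP_def]])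
           apply (simp_all add: mapt_def map_update \<iota>a \<iota>s rone lone)
    done
  have G_rel: "G t \<in> kspan (relZ k)" if t: "t \<in> kspan (relP k)" for t k
    unfolding G_def
  proof (rule push_kspan[OF _ _ t])
    show "\<And>s. s \<in> relP k \<Longrightarrow> fin s" unfolding relP_def by (rule gens_fin)
    show "\<And>s. s \<in> relP k \<Longrightarrow> push (mapt \<iota>) s \<in> kspan (relZ k)" by (rule G_gen)
  qed
  have H_gen: "push (ht cf u i) s \<in> kspan (relZ (Suc k))" if i: "i \<le> k" and s: "s \<in> relZ k" for i s k
    unfolding relZ_def
    apply (rule kspan_gen)
    apply (rule gens_map[where LM="hL cf u i" and \<kappa>="\<lambda>k. if k < i then k else Suc k"
           and \<nu>="\<lambda>k v. if k < i then cf v else v" and n=k, OF _ _ _ _ _ _ _ _ s[unfolded relZ_def]])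
           apply (simp_all add: ht_simp hL_upd cfa cfs)
    done
  have H_rel: "Hm t \<in> kspan (relZ (Suc k))" if t: "t \<in> kspan (relZ k)" for t k
    unfolding Hm_def relZ_def
    by (rule Hm_kspan[OF H_gen[unfolded relZ_def] t[unfolded relZ_def]])
  have F_d: "lin_ext dP (F w) = F (lin_ext dZ w)" if "fin w" for w
    unfolding dP_def dZ_def F_def
    by (rule chain_map[OF _ _ _ that]) (simp_all add: rZ\<pi> lZ\<pi> m\<pi>)
  have G_d: "lin_ext dZ (G w) = G (lin_ext dP w)" if "fin w" for w
    unfolding dP_def dZ_def G_def
    by (rule chain_map[OF _ _ _ that]) (simp_all add: r\<iota> l\<iota> \<iota>m)
  have FG: "F (G w) = w" if "fin w" for w
    unfolding F_def G_def using that
    by (simp add: push_comp push_id mapt_def split_beta \<pi>\<iota> map_idI)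
  have GF: "G (F w) = push (mapt cf) w" if "fin w" for w
  proof -
    have e: "(\<lambda>b. mapt \<iota> (mapt \<pi> b)) = mapt cf" by (rule ext) (simp add: mapt_def split_beta cf_def)
    show ?thesis unfolding F_def G_def using that by (simp add: push_comp e)
  qed
  have Hom: "(\<lambda>g. lin_ext dZ (Hm w) g + Hm (lin_ext dZ w) g) = (\<lambda>g. w g - push (mapt cf) w g)" if "fin w" for w
    unfolding dZ_def Hm_def by (rule hom_chain[where m=mZ and r=rZ and l=lZ and cf=cf and u=u, OF H1 H2 H3 H4 H5 H6 that])
  have F_ch: "F w \<in> bar_chains k" if "w \<in> bar_chains k" for w k
    unfolding F_def by (rule push_mapt_chains[OF that])
  have G_ch: "G w \<in> bar_chains k" if "w \<in> bar_chains k" for w k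
    unfolding G_def by (rule push_mapt_chains[OF that])
  have Hm_ch: "Hm w \<in> bar_chains (Suc k)" if "w \<in> bar_chains k" for w k
    unfolding Hm_def by (rule Hm_chains[OF that])
  have dZ_fin: "fin (lin_ext dZ h)" if "fin h" for h
    unfolding dZ_def by (rule fin_lin_ext[OF that d_fin])
  have dP_fin: "fin (lin_ext dP h)" if "fin h" for h
    unfolding dP_def by (rule fin_lin_ext[OF that d_fin])
  have relZ_fin: "fin t" if "t \<in> kspan (relZ k)" for t k
    using that unfolding relZ_def by (rule rel_fin)
  have relP_fin: "fin t" if "t \<in> kspan (relP k)" for t k
    using that unfolding relP_def by (rule rel_fin)

  let ?Z1 = "bar_cycles cyl_add mZ sZ cyl_one rZ lZ n :: ('x \<times> ('p\<times>'q) list \<times> 'y \<Rightarrow> 'k) set"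
  let ?B1 = "bar_boundaries cyl_add mZ sZ cyl_one rZ lZ n :: ('x \<times> ('p\<times>'q) list \<times> 'y \<Rightarrow> 'k) set"
  let ?Z2 = "bar_cycles (+) (*) sP 1 actX actY n :: ('x \<times> 'p list \<times> 'y \<Rightarrow> 'k) set"
  let ?B2 = "bar_boundaries (+) (*) sP 1 actX actY n :: ('x \<times> 'p list \<times> 'y \<Rightarrow> 'k) set"
  have cycZ: "w \<in> ?Z1 \<longleftrightarrow> w \<in> bar_chains n \<and> (case n of 0 \<Rightarrow> True | Suc m \<Rightarrow> lin_ext dZ w \<in> kspan (relZ m))" for w
    unfolding cycles_iff dZ_def relZ_def ..
  have cycP: "w \<in> ?Z2 \<longleftrightarrow> w \<in> bar_chains n \<and> (case n of 0 \<Rightarrow> True | Suc m \<Rightarrow> lin_ext dP w \<in> kspan (relP m))" for w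
    unfolding cycles_iff dP_def relP_def ..
  have bZ: "z \<in> ?B1 \<longleftrightarrow> (\<exists>h r. z = (\<lambda>g. lin_ext dZ h g + r g) \<and> h \<in> bar_chains (Suc n) \<and> r \<in> kspan (relZ n))" for z
    unfolding bounds_iff dZ_def relZ_def ..
  have bP: "z \<in> ?B2 \<longleftrightarrow> (\<exists>h r. z = (\<lambda>g. lin_ext dP h g + r g) \<and> h \<in> bar_chains (Suc n) \<and> r \<in> kspan (relP n))" for z
    unfolding bounds_iff dP_def relP_def ..

  have c1: "\<forall>u\<in>?Z1. \<forall>v\<in>?Z1. F (\<lambda>g. u g + v g) = (\<lambda>g'. F u g' + F v g')"
  proof (intro ballI)
    fix u v assume u: "u \<in> ?Z1" and v: "v \<in> ?Z1"
    have "fin u" "fin v" using u v cycZ chains_fin by blast+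
    then show "F (\<lambda>g. u g + v g) = (\<lambda>g'. F u g' + F v g')" unfolding F_def by (rule push_add)
  qed
  have c2: "\<forall>c. \<forall>u\<in>?Z1. F (\<lambda>g. c * u g) = (\<lambda>g'. c * F u g')"
  proof (intro ballI allI)
    fix c u assume u: "u \<in> ?Z1"
    have "fin u" using u cycZ chains_fin by blast
    then show "F (\<lambda>g. c * u g) = (\<lambda>g'. c * F u g')" unfolding F_def by (rule push_scale)
  qed
  have c3: "F ` ?Z1 \<subseteq> ?Z2"
  proof
    fix z assume "z \<in> F ` ?Z1"
    then obtain w where w: "w \<in> ?Z1" and z: "z = F w" by blast
    have wc: "w \<in> bar_chains n" using w cycZ by blast
    show "z \<in> ?Z2" unfolding z cycP
    proof (intro conjI)
      show "F w \<in> bar_chains n" by (rule F_ch[OF wc])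
      show "case n of 0 \<Rightarrow> True | Suc m \<Rightarrow> lin_ext dP (F w) \<in> kspan (relP m)"
      proof (cases n)
        case 0 then show ?thesis by simp
      next
        case (Suc m)
        then have "lin_ext dZ w \<in> kspan (relZ m)" using w cycZ by simp
        then show ?thesis using Suc F_d[OF chains_fin[OF wc]] F_rel by simp
      qed
    qed
  qed
  have c3G: "G z \<in> ?Z1" if z: "z \<in> ?Z2" for z
  proof -
    have zc: "z \<in> bar_chains n" using z cycP by blast
    show "G z \<in> ?Z1" unfolding cycZ
    proof (intro conjI)
      show "G z \<in> bar_chains n" by (rule G_ch[OF zc])
      show "case n of 0 \<Rightarrow> True | Suc m \<Rightarrow> lin_ext dZ (G z) \<in> kspan (relZ m)"
      proof (cases n)
        case 0 then show ?thesis by simp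
      next
        case (Suc m)
        then have "lin_ext dP z \<in> kspan (relP m)" using z cycP by simp
        then show ?thesis using Suc G_d[OF chains_fin[OF zc]] G_rel by simp
      qed
    qed
  qed
  have c4: "F ` ?B1 \<subseteq> ?B2"
  proof
    fix z assume "z \<in> F ` ?B1"
    then obtain w where w: "w \<in> ?B1" and z: "z = F w" by blast
    then obtain h r where w': "w = (\<lambda>g. lin_ext dZ h g + r g)" and h: "h \<in> bar_chains (Suc n)"
      and r: "r \<in> kspan (relZ n)" using bZ by blast
    have fh: "fin h" by (rule chains_fin[OF h])
    have "F w = (\<lambda>g. F (lin_ext dZ h) g + F r g)"
      unfolding w' F_def by (rule push_add[OF dZ_fin[OF fh] relZ_fin[OF r]])
    also have "\<dots> = (\<lambda>g. lin_ext dP (F h) g + F r g)" using F_d[OF fh] by simp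
    finally show "z \<in> ?B2" unfolding z bP using F_ch[OF h] F_rel[OF r] by blast
  qed
  have c4G: "G z \<in> ?B1" if z: "z \<in> ?B2" for z
  proof -
    obtain h r where z': "z = (\<lambda>g. lin_ext dP h g + r g)" and h: "h \<in> bar_chains (Suc n)"
      and r: "r \<in> kspan (relP n)" using z bP by blast
    have fh: "fin h" by (rule chains_fin[OF h])
    have "G z = (\<lambda>g. G (lin_ext dP h) g + G r g)"
      unfolding z' G_def by (rule push_add[OF dP_fin[OF fh] relP_fin[OF r]])
    also have "\<dots> = (\<lambda>g. lin_ext dZ (G h) g + G r g)" using G_d[OF fh] by simp
    finally show "G z \<in> ?B1" unfolding bZ using G_ch[OF h] G_rel[OF r] by blast
  qed
  have c5: "\<forall>z\<in>?Z2. \<exists>w\<in>?Z1. (\<lambda>g. z g - F w g) \<in> ?B2"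
  proof
    fix z assume z: "z \<in> ?Z2"
    have zc: "z \<in> bar_chains n" using z cycP by blast
    have "(\<lambda>g. z g - F (G z) g) = (\<lambda>g. lin_ext dP (\<lambda>_. 0) g + (\<lambda>_. 0) g)"
      using FG[OF chains_fin[OF zc]] by (simp add: lin_ext_zero)
    then have "(\<lambda>g. z g - F (G z) g) \<in> ?B2" unfolding bP
      apply (intro exI[of _ "\<lambda>_. 0"] conjI)
        apply assumption
       apply (rule chains_zero)
      apply (rule kspan.zero)
      done
    then show "\<exists>w\<in>?Z1. (\<lambda>g. z g - F w g) \<in> ?B2" using c3G[OF z] by blast
  qed
  have c6: "\<forall>w\<in>?Z1. F w \<in> ?B2 \<longrightarrow> w \<in> ?B1"
  proof (intro ballI impI)
    fix w assume w: "w \<in> ?Z1" and Fw: "F w \<in> ?B2"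
    have wc: "w \<in> bar_chains n" using w cycZ by blast
    have fw: "fin w" by (rule chains_fin[OF wc])
    obtain h r where GF': "G (F w) = (\<lambda>g. lin_ext dZ h g + r g)" and h: "h \<in> bar_chains (Suc n)"
      and r: "r \<in> kspan (relZ n)" using c4G[OF Fw] bZ by blast
    have T: "Hm (lin_ext dZ w) \<in> kspan (relZ n)"
    proof (cases n)
      case 0
      have "lin_ext dZ w = (\<lambda>_. 0)" unfolding dZ_def by (rule d_zero_chains0) (use wc 0 in simp)
      then show ?thesis unfolding Hm_def by (simp add: lin_ext_zero kspan.zero)
    next
      case (Suc m)
      then have "lin_ext dZ w \<in> kspan (relZ m)" using w cycZ by simp
      then show ?thesis using H_rel Suc by simp
    qed
    have fh: "fin h" by (rule chains_fin[OF h])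
    have fH: "fin (Hm w)" by (rule chains_fin[OF Hm_ch[OF wc]])
    have e: "w = (\<lambda>g. lin_ext dZ (\<lambda>b. h b + Hm w b) g + (r g + Hm (lin_ext dZ w) g))"
    proof
      fix g
      have "w g - push (mapt cf) w g = lin_ext dZ (Hm w) g + Hm (lin_ext dZ w) g"
        using fun_cong[OF Hom[OF fw], of g] by simp
      moreover have "push (mapt cf) w g = lin_ext dZ h g + r g"
        using fun_cong[OF GF', of g] GF[OF fw] by simp
      moreover have "lin_ext dZ (\<lambda>b. h b + Hm w b) g = lin_ext dZ h g + lin_ext dZ (Hm w) g"
        using lin_ext_add[OF fh fH, of dZ] by simp
      ultimately show "w g = lin_ext dZ (\<lambda>b. h b + Hm w b) g + (r g + Hm (lin_ext dZ w) g)"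
        by (simp add: algebra_simps)
    qed
    show "w \<in> ?B1" unfolding bZ
      apply (rule exI[of _ "\<lambda>b. h b + Hm w b"], rule exI[of _ "\<lambda>g. r g + Hm (lin_ext dZ w) g"])
      using e chains_add[OF h Hm_ch[OF wc]] kspan_add[OF r T] by blast
  qed
  have "quot_iso ?Z1 ?B1 ?Z2 ?B2"
    unfolding quot_iso_def using c1 c2 c3 c4 c5 c6 by blast
  then show ?thesis unfolding Tor_iso_def mZ_def rZ_def lZ_def sZ_def .
qed

end
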